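(* Let $n\ge1$, let $\mathcal{T}^\bullet_n$ be the set of all triangulations of the once-punctured polygon $P_n^\bullet$, let $G_n=\langle\sigma\rangle$ be the cyclic group of order $n$ acting by rotation, and let $$t_n(q)=\sum_{s=1}^n\begin{bmatrix} 2n-s-1\\ n-1\end{bmatrix}_q .$$ Then $(\mathcal{T}^\bullet_n,G_n,t_n(q))$ exhibits the cyclic sieving phenomenon.
   Context: $P_n^\bullet$ is a disc with $n$ marked points $v_0,\ldots,v_{n-1}$ on its boundary in clockwise order and one interior marked point $\bullet$. Arcs are non-self-intersecting curves with endpoints at marked points, up to isotopy, not isotopic to a boundary segment or contractible. A triangulation of $P_n^\bullet$ is a maximal set of pairwise non-crossing arcs (equivalently a set of pairwise non-crossing arcs cutting $P_n^\bullet$ into triangles, self-folded triangles allowed). The rotation $\sigma$ maps $v_i\mapsto v_{i-1}$. $q$-binomials: $\begin{bmatrix} a\\ b\end{bmatrix}_q=\frac{[a]_q!}{[b]_q![a-b]_q!}$ with $[a]_q=1+\cdots+q^{a-1}$. A triple $(X,G,X(q))$ with $G=\langle\sigma\rangle$ cyclic of order $N$ acting on a finite set $X$ and $X(q)\in\mathbb{Z}[q]$ exhibits the cyclic sieving phenomenon if $X(\zeta_N^j)$ equals the number of fixed points of $\sigma^j$ for every integer $j$, with $\zeta_N$ a primitive $N$-th root of unity. *)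

theory Defs
  imports Complex_Main "HOL-Computational_Algebra.Polynomial"
begin

text \<open>Boundary marked points v_0..v_(n-1) in clockwise order, puncture in the interior.
  Every arc (up to isotopy) is one of:
  Rad i      : the arc from v_i to the puncture;
  Bd i k     : (2 <= k <= n) the arc from v_i to v_((i+k) mod n) such that the region
               between the arc and the boundary path v_i, v_(i+1), ..., v_(i+k)
               (clockwise, k boundary segments) does not contain the puncture.
               For k = n this is the loop at v_i enclosing the puncture; k = 1 would be
               a boundary segment and is excluded.\<close>

datatype parc = Rad nat | Bd nat nat

definition arcs :: "nat \<Rightarrow> parc set" where
  "arcs n = {Rad i | i. i < n} \<union> {Bd i k | i k. i < n \<and> 2 \<le> k \<and> k \<le> n}"

text \<open>A boundary arc Bd i k lifts to the
  integer interval [i, i+k] on the universal cover of the boundary circle (circumference n);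
  two boundary arcs are non-crossing iff some lifts are nested or have disjoint interiors
  on the circle.  A radial arc Rad j is non-crossing with Bd i k iff v_j is not strictly
  inside the puncture-free region cut off by Bd i k.\<close>

fun compatible :: "nat \<Rightarrow> parc \<Rightarrow> parc \<Rightarrow> bool" where
  "compatible n (Rad i) (Rad j) = True"
| "compatible n (Rad j) (Bd i k) = (\<not> (\<exists>t. 0 < t \<and> t < k \<and> (i + t) mod n = j))"
| "compatible n (Bd i k) (Rad j) = (\<not> (\<exists>t. 0 < t \<and> t < k \<and> (i + t) mod n = j))"
| "compatible n (Bd i k) (Bd j l) =
     (\<exists>m::int. let a = int i; b = int i + int k;
                  c = int j + m * int n; d = int j + int l + m * int n
              in (a \<le> c \<and> d \<le> b) \<or> (c \<le> a \<and> b \<le> d) \<or> (b \<le> c \<and> d \<le> a + int n))"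

definition triangulations :: "nat \<Rightarrow> parc set set" where
  "triangulations n = {T. T \<subseteq> arcs n \<and> (\<forall>\<alpha>\<in>T. \<forall>\<beta>\<in>T. compatible n \<alpha> \<beta>) \<and>
      (\<forall>\<alpha>\<in>arcs n. (\<forall>\<beta>\<in>T. compatible n \<alpha> \<beta>) \<longrightarrow> \<alpha> \<in> T)}"

fun rot_arc :: "nat \<Rightarrow> parc \<Rightarrow> parc" where
  "rot_arc n (Rad i) = Rad ((i + n - 1) mod n)"
| "rot_arc n (Bd i k) = Bd ((i + n - 1) mod n) k"

definition rot_tri :: "nat \<Rightarrow> parc set \<Rightarrow> parc set" where
  "rot_tri n T = rot_arc n ` T"

definition qint :: "nat \<Rightarrow> int poly" where
  "qint a = (\<Sum>i<a. monom 1 i)"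

definition qfact :: "nat \<Rightarrow> int poly" where
  "qfact a = (\<Prod>i\<in>{1..a}. qint i)"

definition qbinom :: "nat \<Rightarrow> nat \<Rightarrow> int poly" where
  "qbinom a b = qfact a div (qfact b * qfact (a - b))"

definition t_poly :: "nat \<Rightarrow> int poly" where
  "t_poly n = (\<Sum>s=1..n. qbinom (2 * n - s - 1) (n - 1))"

definition primitive_root :: "nat \<Rightarrow> complex \<Rightarrow> bool" where
  "primitive_root N z \<longleftrightarrow> z ^ N = 1 \<and> (\<forall>k. 0 < k \<and> k < N \<longrightarrow> z ^ k \<noteq> 1)"

definition cyclic_sieving :: "'a set \<Rightarrow> ('a \<Rightarrow> 'a) \<Rightarrow> nat \<Rightarrow> int poly \<Rightarrow> bool" where
  "cyclic_sieving X g N P \<longleftrightarrow>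
     finite X \<and> bij_betw g X X \<and> (\<forall>x\<in>X. (g ^^ N) x = x) \<and>
     (\<forall>z. primitive_root N z \<longrightarrow>
        (\<forall>j::nat. poly (map_poly of_int P) (z ^ j) = of_nat (card {x\<in>X. (g ^^ j) x = x})))"

end

theory Submission
  imports Defs
begin


lemma mp_add: "map_poly (of_int::int\<Rightarrow>'a::comm_ring_1) (p+q) = map_poly of_int p + map_poly of_int q"
  by (rule poly_eqI) (simp add: coeff_map_poly)
lemma mp_mult: "map_poly (of_int::int\<Rightarrow>'a::comm_ring_1) (p*q) = map_poly of_int p * map_poly of_int q"
  by (rule poly_eqI) (simp add: coeff_map_poly coeff_mult)

definition ev :: "complex \<Rightarrow> int poly \<Rightarrow> complex" where
  "ev z p = poly (map_poly of_int p) z"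

lemma ev_add[simp]: "ev z (p+q) = ev z p + ev z q"
  by (simp add: ev_def mp_add)
lemma ev_mult[simp]: "ev z (p*q) = ev z p * ev z q"
  by (simp add: ev_def mp_mult)
lemma ev_0[simp]: "ev z 0 = 0" by (simp add: ev_def)
lemma ev_1[simp]: "ev z 1 = 1" by (simp add: ev_def)
lemma ev_monom[simp]: "ev z (monom 1 i) = z^i"
  by (simp add: ev_def poly_monom map_poly_monom)
lemma ev_sum: "ev z (sum f A) = (\<Sum>x\<in>A. ev z (f x))"
  by (induction A rule: infinite_finite_induct) auto
lemma ev_prod: "ev z (prod f A) = (\<Prod>x\<in>A. ev z (f x))"
  by (induction A rule: infinite_finite_induct) auto

fun G :: "nat \<Rightarrow> nat \<Rightarrow> int poly" where
  "G a 0 = 1"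
| "G 0 (Suc b) = 0"
| "G (Suc a) (Suc b) = G a b + monom 1 (Suc b) * G a (Suc b)"

lemma G_gt: "a < b \<Longrightarrow> G a b = 0"
proof (induction a arbitrary: b)
  case 0 then show ?case by (cases b) auto
next
  case (Suc a) then show ?case by (cases b) auto
qed

lemma G_diag: "G a a = 1"
  by (induction a) (auto simp: G_gt)

lemma qint_0[simp]: "qint 0 = 0" by (simp add: qint_def)
lemma qint_Suc: "qint (Suc k) = qint k + monom 1 k" by (simp add: qint_def)

lemma qint_split: "b \<le> a \<Longrightarrow> qint (Suc a) = qint (Suc b) + monom 1 (Suc b) * qint (a - b)"
proof (induction a rule: dec_induct)
  case base then show ?case by simp
next
  case (step a)
  have "Suc a - b = Suc (a - b)" using step by simp
  then show ?case using step
    by (simp add: qint_Suc[of "Suc a"] qint_Suc[of "a - b"] distrib_left mult_monom algebra_simps)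
qed

lemma qfact_0[simp]: "qfact 0 = 1" by (simp add: qfact_def)
lemma qfact_Suc: "qfact (Suc a) = qfact a * qint (Suc a)"
  by (simp add: qfact_def prod.nat_ivl_Suc' mult.commute)

lemma G_fact: "b \<le> a \<Longrightarrow> qfact a = G a b * qfact b * qfact (a - b)"
proof (induction a arbitrary: b)
  case 0 then show ?case by simp
next
  case (Suc a)
  show ?case
  proof (cases b)
    case 0 then show ?thesis by simp
  next
    case (Suc b')
    have b'le: "b' \<le> a" using Suc.prems Suc by simp
    have t1: "G a b' * qfact (Suc b') * qfact (Suc a - Suc b') = qfact a * qint (Suc b')"
    proof -
      have "Suc a - Suc b' = a - b'" by simp
      then have "G a b' * qfact (Suc b') * qfact (Suc a - Suc b') = (G a b' * qfact b' * qfact (a - b')) * qint (Suc b')"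
        by (simp add: qfact_Suc algebra_simps)
      then show ?thesis using Suc.IH[OF b'le] by simp
    qed
    have t2: "monom 1 (Suc b') * G a (Suc b') * qfact (Suc b') * qfact (Suc a - Suc b') = qfact a * (monom 1 (Suc b') * qint (a - b'))"
    proof (cases "Suc b' \<le> a")
      case True
      have e: "a - b' = Suc (a - Suc b')" using True by simp
      have "monom 1 (Suc b') * G a (Suc b') * qfact (Suc b') * qfact (Suc a - Suc b')
          = monom 1 (Suc b') * (G a (Suc b') * qfact (Suc b') * qfact (a - Suc b')) * qint (a - b')"
        using e by (simp add: qfact_Suc algebra_simps)
      then show ?thesis using Suc.IH[OF True] by (simp add: algebra_simps)
    next
      case False
      then have "a - b' = 0" "a < Suc b'" by auto
      then show ?thesis by (simp add: G_gt)
    qed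
    have "G (Suc a) b * qfact b * qfact (Suc a - b)
        = G a b' * qfact (Suc b') * qfact (Suc a - Suc b') + monom 1 (Suc b') * G a (Suc b') * qfact (Suc b') * qfact (Suc a - Suc b')"
      using Suc by (simp add: algebra_simps)
    also have "\<dots> = qfact a * (qint (Suc b') + monom 1 (Suc b') * qint (a - b'))"
      using t1 t2 by (simp add: algebra_simps)
    also have "\<dots> = qfact (Suc a)" using qint_split[OF b'le] by (simp add: qfact_Suc)
    finally show ?thesis by simp
  qed
qed

lemma qint_nz: "i \<ge> 1 \<Longrightarrow> qint i \<noteq> 0"
proof
  assume "i \<ge> 1" "qint i = 0"
  then have "poly (qint i) 1 = 0" by simp
  moreover have "poly (qint i) 1 = of_nat i" by (simp add: qint_def poly_sum poly_monom)
  ultimately show False using \<open>i \<ge> 1\<close> by simp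
qed

lemma qfact_nz: "qfact a \<noteq> 0"
  by (simp add: qfact_def qint_nz)

lemma qbinom_G: "b \<le> a \<Longrightarrow> qbinom a b = G a b"
  unfolding qbinom_def using G_fact[of b a] qfact_nz
  by (simp add: mult.assoc)

lemma ev_qint: "ev w (qint i) = (\<Sum>t<i. w^t)"
  by (simp add: qint_def ev_sum)

lemma ev_G_rec: "ev w (G (Suc a) (Suc b)) = ev w (G a b) + w^(Suc b) * ev w (G a (Suc b))"
  by simp

locale rou = fixes w :: complex and e :: nat
  assumes e_pos: "e \<ge> 1" and w_e: "w^e = 1" and w_prim: "\<And>k. 0 < k \<Longrightarrow> k < e \<Longrightarrow> w^k \<noteq> 1"
begin

lemma w_pow_mod: "w^k = w^(k mod e)"
proof -
  have "w^k = w^(e * (k div e) + k mod e)" by simp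
  also have "\<dots> = (w^e)^(k div e) * w^(k mod e)" by (simp only: power_add power_mult)
  finally show ?thesis using w_e by simp
qed

lemma ev_qint_nz: "1 \<le> i \<Longrightarrow> i < e \<Longrightarrow> ev w (qint i) \<noteq> 0"
proof -
  assume i: "1 \<le> i" "i < e"
  have w1: "w \<noteq> 1" using w_prim[of 1] i by simp
  have "ev w (qint i) = (1 - w^i) / (1 - w)" using w1 by (simp add: ev_qint sum_gp_strict)
  moreover have "w^i \<noteq> 1" using w_prim i by simp
  ultimately show ?thesis using w1 by simp
qed

lemma ev_qint_e: "2 \<le> e \<Longrightarrow> ev w (qint e) = 0"
proof -
  assume "2 \<le> e"
  then have w1: "w \<noteq> 1" using w_prim[of 1] by simp
  have "ev w (qint e) = (1 - w^e) / (1 - w)" using w1 by (simp add: ev_qint sum_gp_strict)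
  then show ?thesis using w_e by simp
qed

lemma ev_qfact_nz: "k < e \<Longrightarrow> ev w (qfact k) \<noteq> 0"
  by (simp add: qfact_def ev_prod ev_qint_nz)

lemma ev_qfact_e: "2 \<le> e \<Longrightarrow> ev w (qfact e) = 0"
proof -
  assume a: "2 \<le> e"
  have "e \<in> {1..e}" using a by simp
  then show ?thesis using ev_qint_e[OF a] by (auto simp: qfact_def ev_prod intro: prod_zero)
qed

lemma G_e_zero: "0 < k \<Longrightarrow> k < e \<Longrightarrow> ev w (G e k) = 0"
proof -
  assume k: "0 < k" "k < e"
  have "ev w (qfact e) = ev w (G e k) * ev w (qfact k) * ev w (qfact (e - k))"
    using G_fact[of k e] k by simp
  moreover have "ev w (qfact e) = 0" using ev_qfact_e k by simp
  moreover have "ev w (qfact k) \<noteq> 0" "ev w (qfact (e - k)) \<noteq> 0" using ev_qfact_nz k by auto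
  ultimately show ?thesis by simp
qed

lemma G_small_last: "r < e \<Longrightarrow> ev w (G r (e - 1)) = (if r = e - 1 then 1 else 0)"
  by (auto simp: G_diag G_gt)

lemma lucas: "ev w (G a b) = of_nat ((a div e) choose (b div e)) * ev w (G (a mod e) (b mod e))"
proof (induction a arbitrary: b)
  case 0
  show ?case
  proof (cases b)
    case 0 then show ?thesis by simp
  next
    case (Suc b')
    show ?thesis
    proof (cases "b mod e = 0")
      case True
      then have "b div e \<ge> 1" using Suc e_pos
        by (metis One_nat_def div_eq_0_iff less_one linorder_not_le mod_less nat.simps(3))
      then show ?thesis using Suc True by simp
    next
      case False
      then show ?thesis using Suc by (simp add: G_gt)
    qed
  qed
next
  case (Suc a)
  show ?case
  proof (cases b)
    case 0 then show ?thesis by simp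
  next
    case (Suc b')
    define A where "A = a div e"
    define r where "r = a mod e"
    define B where "B = b' div e"
    define s where "s = b' mod e"
    have r_lt: "r < e" and s_lt: "s < e" using e_pos by (simp_all add: r_def s_def)
    have rec: "ev w (G (Suc a) (Suc b')) = ev w (G a b') + w^(Suc b') * ev w (G a (Suc b'))" by simp
    have ih1: "ev w (G a b') = of_nat (A choose B) * ev w (G r s)"
      using Suc.IH[of b'] by (simp add: A_def B_def r_def s_def)
    have ih2: "ev w (G a (Suc b')) = of_nat (A choose (Suc b' div e)) * ev w (G r (Suc b' mod e))"
      using Suc.IH[of "Suc b'"] by (simp add: A_def r_def)
    have wpow: "w^(Suc b') = w^(Suc b' mod e)" by (rule w_pow_mod)
    define L where "L = ev w (G (Suc a) (Suc b'))"
    have main: "L = of_nat (A choose B) * ev w (G r s)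
        + w^(Suc b' mod e) * (of_nat (A choose (Suc b' div e)) * ev w (G r (Suc b' mod e)))"
      using rec unfolding ih1 ih2 wpow L_def .
    have goal: "?thesis = (L = of_nat ((Suc a div e) choose (Suc b' div e)) * ev w (G (Suc a mod e) (Suc b' mod e)))"
      unfolding L_def \<open>b = Suc b'\<close> ..
    have fin: "L = of_nat ((Suc a div e) choose (Suc b' div e)) * ev w (G (Suc a mod e) (Suc b' mod e))"
    proof (cases "r + 1 < e")
      case rT: True
      have sa: "Suc a div e = A" "Suc a mod e = Suc r"
        using rT by (simp_all add: A_def r_def div_Suc mod_Suc)
      show ?thesis
      proof (cases "s + 1 < e")
        case sT: True
        have sb: "Suc b' div e = B" "Suc b' mod e = Suc s"
          using sT by (simp_all add: B_def s_def div_Suc mod_Suc)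
        show ?thesis using main unfolding sa sb by (simp add: algebra_simps)
      next
        case sF: False
        then have s_last: "s = e - 1" using s_lt by simp
        have sb: "Suc b' div e = Suc B" "Suc b' mod e = 0"
          using s_last e_pos by (simp_all add: B_def s_def div_Suc mod_Suc)
        have "ev w (G r s) = 0" using G_gt[of r s] rT s_last by simp
        then show ?thesis using main unfolding sa sb by simp
      qed
    next
      case rF: False
      then have r_last: "r = e - 1" using r_lt by simp
      have sa: "Suc a div e = Suc A" "Suc a mod e = 0"
        using r_last e_pos by (simp_all add: A_def r_def div_Suc mod_Suc)
      show ?thesis
      proof (cases "s + 1 < e")
        case sT: True
        have sb: "Suc b' div e = B" "Suc b' mod e = Suc s"
          using sT by (simp_all add: B_def s_def div_Suc mod_Suc)
        have "ev w (G r s) + w^(Suc s) * ev w (G r (Suc s)) = ev w (G (Suc r) (Suc s))" by simp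
        also have "Suc r = e" using r_last e_pos by simp
        finally have z: "ev w (G r s) + w^(Suc s) * ev w (G r (Suc s)) = 0"
          using G_e_zero[of "Suc s"] sT by simp
        have "L = of_nat (A choose B) * (ev w (G r s) + w^(Suc s) * ev w (G r (Suc s)))"
          using main unfolding sb by (simp add: algebra_simps)
        then show ?thesis using z unfolding sa sb by simp
      next
        case sF: False
        then have s_last: "s = e - 1" using s_lt by simp
        have sb: "Suc b' div e = Suc B" "Suc b' mod e = 0"
          using s_last e_pos by (simp_all add: B_def s_def div_Suc mod_Suc)
        have "ev w (G r s) = 1" using r_last s_last G_diag by simp
        then show ?thesis using main unfolding sa sb by simp
      qed
    qed
    then show ?thesis using goal by simp
  qed
qed


lemma divmod_helper: "c < (e::nat) \<Longrightarrow> (c + q*e) div e = q \<and> (c + q*e) mod e = c"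
  by simp

lemma block_sum: "(\<Sum>k<q*e. f k) = (\<Sum>i<q. \<Sum>r<e. f (i*e + r))"
proof (induction q)
  case 0 then show ?case by simp
next
  case (Suc q)
  have "(\<Sum>k<Suc q*e. f k) = (\<Sum>k<q*e. f k) + (\<Sum>k\<in>{q*e..<q*e+e}. f k)"
    by (simp add: atLeast0LessThan[symmetric] sum.atLeastLessThan_concat add.commute)
  also have "(\<Sum>k\<in>{q*e..<q*e+e}. f k) = (\<Sum>r<e. f (q*e + r))"
    using sum.shift_bounds_nat_ivl[of f 0 "q*e" e]
    by (simp add: atLeast0LessThan add.commute)
  finally show ?case using Suc by simp
qed

lemma t_eval:
  assumes d: "d \<ge> 1"
  shows "ev w (t_poly (d*e)) = of_nat ((2*d-1) choose d)"
proof -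
  define n where "n = d*e"
  have n1: "(n - 1) div e = d - 1" "(n - 1) mod e = e - 1"
  proof -
    obtain d' where d': "d = Suc d'" using d by (cases d) auto
    obtain e' where e': "e = Suc e'" using e_pos by (cases e) auto
    have "n - 1 = e' + d' * e" unfolding n_def d' e' by (simp add: algebra_simps)
    moreover have "e' < e" using e' by simp
    ultimately show "(n - 1) div e = d - 1" "(n - 1) mod e = e - 1" using divmod_helper[of e' d'] d' e' by simp_all
  qed
  define F where "F k = ev w (G (n + k - 1) (n - 1))" for k
  have "ev w (t_poly n) = (\<Sum>s=1..n. ev w (G (2*n-s-1) (n-1)))"
    unfolding t_poly_def ev_sum
  proof (intro sum.cong refl)
    fix s assume "s \<in> {1..n}"
    then have "n - 1 \<le> 2*n-s-1" by auto
    then show "ev w (qbinom (2*n-s-1) (n-1)) = ev w (G (2*n-s-1) (n-1))" by (simp add: qbinom_G)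
  qed
  also have "\<dots> = (\<Sum>k<n. F k)"
  proof -
    have "(\<Sum>k<n. F k) = (\<Sum>s\<in>(\<lambda>k. n - k) ` {..<n}. ev w (G (2*n-s-1) (n-1)))"
      by (subst sum.reindex) (auto simp: inj_on_def F_def intro!: sum.cong arg_cong[where f="\<lambda>x. ev w (G x (n-1))"])
    also have "(\<lambda>k. n - k) ` {..<n} = {1..n}"
    proof
      show "{1..n} \<subseteq> (\<lambda>k. n - k) ` {..<n}"
      proof
        fix s assume "s \<in> {1..n}"
        then have "s = n - (n - s)" "n - s < n" by auto
        then show "s \<in> (\<lambda>k. n - k) ` {..<n}" by blast
      qed
    qed auto
    finally show ?thesis by simp
  qed
  also have "\<dots> = (\<Sum>i<d. \<Sum>r<e. F (i*e + r))"
    unfolding n_def using block_sum[of F d] by (simp add: mult.commute)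
  also have "\<dots> = (\<Sum>i<d. of_nat ((d - 1 + i) choose (d - 1)))"
  proof (intro sum.cong refl)
    fix i assume "i \<in> {..<d}"
    have e_eq: "e = Suc (e - 1)" using e_pos by simp
    have "(\<Sum>r<e. F (i*e + r)) = F (i*e) + (\<Sum>r<e-1. F (i*e + Suc r))"
      by (subst e_eq, subst sum.lessThan_Suc_shift) simp
    also have "(\<Sum>r<e-1. F (i*e + Suc r)) = 0"
    proof (intro sum.neutral ballI)
      fix r assume r: "r \<in> {..<e-1}"
      have eq: "n + (i*e + Suc r) - 1 = r + (d + i) * e" unfolding n_def by (simp add: algebra_simps)
      have "r < e" using r by simp
      then have "(n + (i*e + Suc r) - 1) mod e = r" unfolding eq using divmod_helper[of r "d+i"] by blast
      then have "ev w (G ((n + (i*e + Suc r) - 1) mod e) ((n - 1) mod e)) = 0"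
        using G_small_last[of r] r n1 by simp
      then show "F (i*e + Suc r) = 0" unfolding F_def by (subst lucas) simp
    qed
    also have "F (i*e) = of_nat ((d - 1 + i) choose (d - 1))"
    proof -
      obtain d' where d': "d = Suc d'" using d by (cases d) auto
      obtain e' where e': "e = Suc e'" using e_pos by (cases e) auto
      have "n + i*e - 1 = e' + (d' + i) * e" unfolding n_def d' e' by (simp add: algebra_simps)
      moreover have "e' < e" using e' by simp
      ultimately have "(n + i*e - 1) div e = d - 1 + i" "(n + i*e - 1) mod e = e - 1" using divmod_helper[of e' "d' + i"] d' e' by simp_all
      then show ?thesis unfolding F_def using n1 G_small_last[of "e-1"] e_pos by (subst lucas) simp
    qed
    finally show "(\<Sum>r<e. F (i*e + r)) = of_nat ((d - 1 + i) choose (d - 1))" by simp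
  qed
  also have "\<dots> = of_nat (\<Sum>i\<le>d-1. (d - 1 + i) choose (d - 1))"
    using d by (simp add: lessThan_Suc_atMost[symmetric])
  also have "(\<Sum>i\<le>d-1. (d - 1 + i) choose (d - 1)) = (2*d-1) choose d"
  proof -
    have h: "d - 1 + (d - 1) + 1 = 2*d - 1" "d - 1 + 1 = d" using d by auto
    show ?thesis using choose_rising_sum(1)[of "d-1" "d-1"] unfolding h .
  qed
  finally show ?thesis unfolding n_def .
qed

end


locale lam =
  fixes B :: "(int \<times> int) set" and R :: "int set" and N :: int
  assumes len: "(u,v) \<in> B \<Longrightarrow> 2 \<le> v - u \<and> v - u \<le> N"
  and lamin: "(u,v) \<in> B \<Longrightarrow> (u',v') \<in> B \<Longrightarrow> \<not> (u < u' \<and> u' < v \<and> v < v')"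
  and radok: "r \<in> R \<Longrightarrow> (u,v) \<in> B \<Longrightarrow> \<not> (u < r \<and> r < v)"
  and maxB: "2 \<le> v - u \<Longrightarrow> v - u \<le> N \<Longrightarrow>
     (\<And>u' v'. (u',v') \<in> B \<Longrightarrow> \<not> (u < u' \<and> u' < v \<and> v < v') \<and> \<not> (u' < u \<and> u < v' \<and> v' < v)) \<Longrightarrow>
     (\<And>r. r \<in> R \<Longrightarrow> \<not> (u < r \<and> r < v)) \<Longrightarrow> (u,v) \<in> B"
  and maxR: "(\<And>u v. (u,v) \<in> B \<Longrightarrow> \<not> (u < r \<and> r < v)) \<Longrightarrow> r \<in> R"
begin

definition mz :: "int \<Rightarrow> int \<Rightarrow> int" where
  "mz u v = Max ({z. u < z \<and> z < v \<and> (u,z) \<in> B} \<union> {u+1})"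

lemma mz_fin: "finite ({z. u < z \<and> z < v \<and> (u,z) \<in> B} \<union> {u+1})"
proof -
  have "{z. u < z \<and> z < v \<and> (u,z) \<in> B} \<subseteq> {u<..<v}" by auto
  then show ?thesis using finite_subset by auto
qed

lemma mz_props':
  assumes uv: "u + 2 \<le> v"
  shows "u < mz u v" "mz u v < v" "(u, mz u v) \<in> B \<or> mz u v = u + 1"
    "\<And>z. u < z \<Longrightarrow> z < v \<Longrightarrow> (u,z) \<in> B \<Longrightarrow> z \<le> mz u v"
proof -
  let ?S = "{z. u < z \<and> z < v \<and> (u,z) \<in> B} \<union> {u+1}"
  have in_S: "mz u v \<in> ?S" unfolding mz_def using mz_fin by (intro Max_in) auto
  show "u < mz u v" "mz u v < v" "(u, mz u v) \<in> B \<or> mz u v = u + 1" using in_S uv by auto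
  show "\<And>z. u < z \<Longrightarrow> z < v \<Longrightarrow> (u,z) \<in> B \<Longrightarrow> z \<le> mz u v"
    unfolding mz_def using mz_fin by (intro Max_ge) auto
qed

lemma mz_props:
  assumes "(u,v) \<in> B"
  shows "u < mz u v" "mz u v < v" "(u, mz u v) \<in> B \<or> mz u v = u + 1"
    "\<And>z. u < z \<Longrightarrow> z < v \<Longrightarrow> (u,z) \<in> B \<Longrightarrow> z \<le> mz u v"
  using mz_props'[of u v] len[OF assms] by auto

lemma apex:
  assumes uv: "(u,v) \<in> B"
  shows "(mz u v, v) \<in> B \<or> v = mz u v + 1"
proof (cases "v = mz u v + 1")
  case True then show ?thesis by simp
next
  case False
  define z where "z = mz u v"
  have z: "u < z" "z < v" "(u, z) \<in> B \<or> z = u + 1" "\<And>y. u < y \<Longrightarrow> y < v \<Longrightarrow> (u,y) \<in> B \<Longrightarrow> y \<le> z"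
    using mz_props[OF uv] unfolding z_def by auto
  have "(z, v) \<in> B"
  proof (rule maxB)
    show "2 \<le> v - z" using False z unfolding z_def by simp
    show "v - z \<le> N" using len[OF uv] z by simp
  next
    fix u' v' assume b: "(u',v') \<in> B"
    show "\<not> (z < u' \<and> u' < v \<and> v < v') \<and> \<not> (u' < z \<and> z < v' \<and> v' < v)"
    proof
      show "\<not> (z < u' \<and> u' < v \<and> v < v')" using lamin[OF uv b] z by auto
      show "\<not> (u' < z \<and> z < v' \<and> v' < v)"
      proof
        assume c: "u' < z \<and> z < v' \<and> v' < v"
        consider "u' < u" | "u' = u" | "u < u'" by linarith
        then show False
        proof cases
          case 1 then show False using lamin[OF b uv] c z by auto
        next
          case 2
          have "v' \<le> z" using z(4)[of v'] b c 2 z(1) by auto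
          then show False using c by auto
        next
          case 3
          then have uz: "(u,z) \<in> B" using z c by auto
          show False using lamin[OF uz b] c 3 by auto
        qed
      qed
    qed
  next
    fix r assume "r \<in> R"
    then show "\<not> (z < r \<and> r < v)" using radok[OF _ uv] z by auto
  qed
  then show ?thesis unfolding z_def by simp
qed

lemma cover_split:
  assumes "(u,v) \<in> B" "u < z" "z < v"
  shows "\<exists>u' v'. (u',v') \<in> B \<and> u' < z \<and> z < v' \<and> ((u',z) \<in> B \<or> z = u'+1) \<and> ((z,v') \<in> B \<or> v' = z+1)"
  using assms
proof (induction "nat (v - u)" arbitrary: u v rule: less_induct)
  case less
  define w where "w = mz u v"
  have w: "u < w" "w < v" "(u, w) \<in> B \<or> w = u + 1" "(w, v) \<in> B \<or> v = w + 1"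
    using mz_props[OF less.prems(1)] apex[OF less.prems(1)] unfolding w_def by auto
  consider "w = z" | "z < w" | "w < z" by linarith
  then show ?case
  proof cases
    case 1 then show ?thesis using less.prems w by blast
  next
    case 2
    then have "(u,w) \<in> B" using w less.prems by auto
    then show ?thesis using less.hyps[of w u] less.prems 2 w by auto
  next
    case 3
    then have "(w,v) \<in> B" using w less.prems by auto
    then show ?thesis using less.hyps[of v w] less.prems 3 w by auto
  qed
qed

lemma nested:
  assumes "(u,v) \<in> B" "(u',v') \<in> B" "u < x" "x < v" "u' < x" "x < v'"
  shows "(u \<le> u' \<and> v' \<le> v) \<or> (u' \<le> u \<and> v \<le> v')"
  using lamin[OF assms(1,2)] lamin[OF assms(2,1)] assms(3-6) by linarith

lemma mz_free:
  assumes "(u,v) \<in> B" "(u',v') \<in> B" "u \<le> u'" "v' \<le> v" "(u',v') \<noteq> (u,v)"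
  shows "\<not> (u' < mz u v \<and> mz u v < v')"
proof
  assume c: "u' < mz u v \<and> mz u v < v'"
  have z: "u < mz u v" "mz u v < v" "(u, mz u v) \<in> B \<or> mz u v = u + 1"
    "\<And>y. u < y \<Longrightarrow> y < v \<Longrightarrow> (u,y) \<in> B \<Longrightarrow> y \<le> mz u v"
    using mz_props[OF assms(1)] by auto
  show False
  proof (cases "u' = u")
    case True
    then have "v' < v" using assms by auto
    then show False using z(4)[of v'] assms c True by auto
  next
    case False
    then have "u < u'" using assms by auto
    then have um: "(u, mz u v) \<in> B" using z c by auto
    show False using lamin[OF um assms(2)] c \<open>u < u'\<close> by auto
  qed
qed

lemma LB_up:
  assumes pq: "p < q"
  and F: "F \<subseteq> {(u,v). (u,v) \<in> B \<and> p \<le> u \<and> v \<le> q}"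
  and Rs: "Rs \<subseteq> {r. r \<in> R \<and> p < r \<and> r < q}"
  shows "finite F \<and> finite Rs \<and> int (card F) + int (card Rs) \<le> q - p - 1"
proof -
  let ?c = "\<lambda>(u,v). mz u v"
  have finF: "finite F"
  proof -
    have "F \<subseteq> {p..q} \<times> {p..q}"
    proof
      fix x assume "x \<in> F"
      then obtain u v where "x = (u,v)" "(u,v) \<in> B" "p \<le> u" "v \<le> q" using F by auto
      then show "x \<in> {p..q} \<times> {p..q}" using len[of u v] by auto
    qed
    then show ?thesis using finite_subset by blast
  qed
  have "Rs \<subseteq> {p<..<q}" using Rs by auto
  then have finR: "finite Rs" using finite_subset by blast
  have inj: "inj_on ?c F"
  proof (rule inj_onI)
    fix x y assume x: "x \<in> F" and y: "y \<in> F" and eq: "?c x = ?c y"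
    obtain u v where xe: "x = (u,v)" by (cases x)
    obtain u' v' where ye: "y = (u',v')" by (cases y)
    have b1: "(u,v) \<in> B" and b2: "(u',v') \<in> B" using x y F xe ye by auto
    have eq': "mz u v = mz u' v'" using eq xe ye by simp
    have i1: "u < mz u v" "mz u v < v" using mz_props[OF b1] by auto
    have i2: "u' < mz u' v'" "mz u' v' < v'" using mz_props[OF b2] by auto
    show "x = y"
    proof (rule ccontr)
      assume ne: "x \<noteq> y"
      from nested[OF b1 b2 i1 i2[unfolded eq'[symmetric]]]
      have "(u \<le> u' \<and> v' \<le> v) \<or> (u' \<le> u \<and> v \<le> v')" .
      then show False
      proof
        assume h: "u \<le> u' \<and> v' \<le> v"
        show False using mz_free[OF b1 b2] h ne xe ye i2 eq' by auto
      next
        assume h: "u' \<le> u \<and> v \<le> v'"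
        show False using mz_free[OF b2 b1] h ne xe ye i1 eq' by auto
      qed
    qed
  qed
  have disj: "?c ` F \<inter> Rs = {}"
  proof (rule ccontr)
    assume "?c ` F \<inter> Rs \<noteq> {}"
    then obtain u v where uv: "(u,v) \<in> F" "mz u v \<in> Rs" by auto
    have b: "(u,v) \<in> B" using uv F by auto
    show False using radok[of "mz u v" u v] uv Rs b mz_props[OF b] by auto
  qed
  have sub: "?c ` F \<union> Rs \<subseteq> {p<..<q}"
  proof -
    have "?c ` F \<subseteq> {p<..<q}"
    proof
      fix x assume "x \<in> ?c ` F"
      then obtain u v where uv: "(u,v) \<in> F" "x = mz u v" by auto
      have b: "(u,v) \<in> B" using uv F by auto
      show "x \<in> {p<..<q}" using mz_props[OF b] uv F by auto
    qed
    then show ?thesis using Rs by auto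
  qed
  have "card (?c ` F \<union> Rs) \<le> card {p<..<q}" using sub by (intro card_mono) auto
  moreover have "card (?c ` F \<union> Rs) = card F + card Rs"
    using card_Un_disjoint[OF _ finR disj] finF card_image[OF inj] by simp
  ultimately show ?thesis using finF finR pq by simp
qed


definition AB :: "int \<Rightarrow> int \<Rightarrow> (int \<times> int) set" where
  "AB p q = {(u,v). (u,v) \<in> B \<and> p \<le> u \<and> u < q \<and> (v \<le> q \<or> p < u)}"
definition AR :: "int \<Rightarrow> int \<Rightarrow> int set" where
  "AR p q = {r. r \<in> R \<and> p < r \<and> r < q}"

lemma AB_fin: "finite (AB p q)"
proof -
  have "AB p q \<subseteq> {p..q} \<times> {p..q+N}"
  proof
    fix x assume "x \<in> AB p q"
    then obtain u v where "x = (u,v)" "(u,v) \<in> B" "p \<le> u" "u < q" unfolding AB_def by auto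
    then show "x \<in> {p..q} \<times> {p..q+N}" using len[of u v] by auto
  qed
  then show ?thesis using finite_subset by blast
qed

lemma AR_fin: "finite (AR p q)"
proof -
  have "AR p q \<subseteq> {p<..<q}" unfolding AR_def by auto
  then show ?thesis using finite_subset by blast
qed

lemma card_three:
  assumes "finite A" "A1 \<subseteq> A" "A2 \<subseteq> A" "A1 \<inter> A2 = {}" "X \<subseteq> A" "X \<inter> (A1 \<union> A2) = {}"
  shows "card A1 + card A2 + card X \<le> card A"
proof -
  have f: "finite A1" "finite A2" "finite X" using assms finite_subset by metis+
  have "card (A1 \<union> A2 \<union> X) = card A1 + card A2 + card X"
    using f assms(4,6) by (simp add: card_Un_disjoint Int_commute)
  moreover have "card (A1 \<union> A2 \<union> X) \<le> card A" using assms by (intro card_mono) auto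
  ultimately show ?thesis by simp
qed

lemma LB_low:
  assumes "p < q" "\<And>u v. (u,v) \<in> B \<Longrightarrow> u < p \<Longrightarrow> p < v \<Longrightarrow> q \<le> v"
  shows "q - p - 1 \<le> int (card (AB p q)) + int (card (AR p q))"
  using assms
proof (induction "nat (q - p)" arbitrary: p q rule: less_induct)
  case less
  note P = less.prems(2)
  show ?case
  proof (cases "q = p + 1")
    case True then show ?thesis by simp
  next
    case False
    then have pq2: "p + 2 \<le> q" using less.prems by simp
    define z where "z = mz p q"
    have z: "p < z" "z < q" "(p, z) \<in> B \<or> z = p + 1" "\<And>y. p < y \<Longrightarrow> y < q \<Longrightarrow> (p,y) \<in> B \<Longrightarrow> y \<le> z"
      using mz_props'[OF pq2] unfolding z_def by auto
    have Pz1: "\<And>u v. (u,v) \<in> B \<Longrightarrow> u < p \<Longrightarrow> p < v \<Longrightarrow> z \<le> v" using P z by force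
    have Pz2: "\<And>u v. (u,v) \<in> B \<Longrightarrow> u < z \<Longrightarrow> z < v \<Longrightarrow> q \<le> v"
    proof (rule ccontr)
      fix u v assume b: "(u,v) \<in> B" "u < z" "z < v" "\<not> q \<le> v"
      consider "u < p" | "u = p" | "p < u" by linarith
      then show False
      proof cases
        case 1 then show False using P[OF b(1) 1] b z by auto
      next
        case 2
        have "v \<le> z" using z(4)[of v] b 2 z(1) by auto
        then show False using b by auto
      next
        case 3
        then have pz: "(p,z) \<in> B" using z b by auto
        show False using lamin[OF pz b(1)] 3 b by auto
      qed
    qed
    have IH1: "z - p - 1 \<le> int (card (AB p z)) + int (card (AR p z))"
      by (rule less.hyps) (use z Pz1 in auto)
    have IH2: "q - z - 1 \<le> int (card (AB z q)) + int (card (AR z q))"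
      by (rule less.hyps) (use z Pz2 in auto)
    have subB: "AB p z \<subseteq> AB p q" "AB z q \<subseteq> AB p q" "AB p z \<inter> AB z q = {}"
      using z unfolding AB_def by auto
    have subR: "AR p z \<subseteq> AR p q" "AR z q \<subseteq> AR p q" "AR p z \<inter> AR z q = {}"
      using z unfolding AR_def by auto
    have extra: "(\<exists>x. x \<in> AB p q \<and> x \<notin> AB p z \<union> AB z q) \<or> (\<exists>x. x \<in> AR p q \<and> x \<notin> AR p z \<union> AR z q)"
    proof (cases "(p,q) \<in> B")
      case True
      have "(p,q) \<in> AB p q" "(p,q) \<notin> AB p z \<union> AB z q" using True z unfolding AB_def by auto
      then show ?thesis by blast
    next
      case notB: False
      show ?thesis
      proof (cases "\<exists>u v. (u,v) \<in> B \<and> u < z \<and> z < v")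
        case True
        then obtain u v where "(u,v) \<in> B" "u < z" "z < v" by auto
        from cover_split[OF this] obtain u' v' where c: "(u',v') \<in> B" "u' < z" "z < v'"
          "(u',z) \<in> B \<or> z = u'+1" "(z,v') \<in> B \<or> v' = z+1" by blast
        have "q \<le> v'" using Pz2[OF c(1-3)] .
        have "v' \<noteq> q"
        proof
          assume vq: "v' = q"
          consider "u' < p" | "u' = p" | "p < u'" by linarith
          then show False
          proof cases
            case 1
            then have "(u',z) \<in> B" using c z by auto
            then show False using P[of u' z] 1 z by auto
          next
            case 2 then show False using notB c vq by auto
          next
            case 3
            then have pz: "(p,z) \<in> B" using z c by auto
            show False using lamin[OF pz c(1)] 3 c vq z by auto
          qed
        qed
        then have "q < v'" using \<open>q \<le> v'\<close> by simp
        then have "(z,v') \<in> B" using c z by auto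
        then have "(z,v') \<in> AB p q" "(z,v') \<notin> AB p z \<union> AB z q" using z \<open>q < v'\<close> unfolding AB_def by auto
        then show ?thesis by blast
      next
        case False
        then have "z \<in> R" by (intro maxR) auto
        then have "z \<in> AR p q" "z \<notin> AR p z \<union> AR z q" using z unfolding AR_def by auto
        then show ?thesis by blast
      qed
    qed
    have cB: "card (AB p z) + card (AB z q) + card X \<le> card (AB p q)"
      if "X \<subseteq> AB p q" "X \<inter> (AB p z \<union> AB z q) = {}" for X
      using card_three[OF AB_fin subB that] .
    have cR: "card (AR p z) + card (AR z q) + card X \<le> card (AR p q)"
      if "X \<subseteq> AR p q" "X \<inter> (AR p z \<union> AR z q) = {}" for X
      using card_three[OF AR_fin subR that] .
    from extra show ?thesis
    proof
      assume "\<exists>x. x \<in> AB p q \<and> x \<notin> AB p z \<union> AB z q"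
      then obtain x where x: "x \<in> AB p q" "x \<notin> AB p z \<union> AB z q" by blast
      have "card (AB p z) + card (AB z q) + 1 \<le> card (AB p q)" using cB[of "{x}"] x by auto
      moreover have "card (AR p z) + card (AR z q) + 0 \<le> card (AR p q)" using cR[of "{}"] by auto
      ultimately show ?thesis using IH1 IH2 by linarith
    next
      assume "\<exists>x. x \<in> AR p q \<and> x \<notin> AR p z \<union> AR z q"
      then obtain x where x: "x \<in> AR p q" "x \<notin> AR p z \<union> AR z q" by blast
      have "card (AR p z) + card (AR z q) + 1 \<le> card (AR p q)" using cR[of "{x}"] x by auto
      moreover have "card (AB p z) + card (AB z q) + 0 \<le> card (AB p q)" using cB[of "{}"] by auto
      ultimately show ?thesis using IH1 IH2 by linarith
    qed
  qed
qed

lemma R_nonempty: "\<exists>r. r \<in> R"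
proof (cases "B = {}")
  case True
  then have "0 \<in> R" by (intro maxR) auto
  then show ?thesis by blast
next
  case False
  let ?L = "(\<lambda>(u,v). v - u) ` B"
  have finL: "finite ?L"
  proof -
    have "?L \<subseteq> {2..N}" using len by auto
    then show ?thesis using finite_subset by blast
  qed
  have "Max ?L \<in> ?L" using False finL by (intro Max_in) auto
  then obtain u v where uv: "(u,v) \<in> B" "v - u = Max ?L" by auto
  have "u \<in> R"
  proof (rule maxR)
    fix u' v' assume b: "(u',v') \<in> B"
    show "\<not> (u' < u \<and> u < v')"
    proof
      assume c: "u' < u \<and> u < v'"
      then have "v \<le> v'" using lamin[OF b uv(1)] by auto
      moreover have "v' - u' \<le> Max ?L" using finL b by (intro Max_ge) auto
      ultimately show False using c uv by auto
    qed
  qed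
  then show ?thesis by blast
qed

end


definition cross :: "int \<Rightarrow> int \<Rightarrow> int \<Rightarrow> int \<Rightarrow> bool" where
  "cross a b c d \<longleftrightarrow> (a < c \<and> c < b \<and> b < d) \<or> (c < a \<and> a < d \<and> d < b)"

lemma lift_iff:
  assumes "i < n"
  shows "(x mod int n = int i) = (\<exists>p. x = int i + p * int n)"
proof
  assume "x mod int n = int i"
  then have "x = int i + (x div int n) * int n" by (metis mult.commute div_mult_mod_eq add.commute)
  then show "\<exists>p. x = int i + p * int n" by blast
next
  assume "\<exists>p. x = int i + p * int n"
  then obtain p where "x = int i + p * int n" by blast
  then show "x mod int n = int i" using assms by simp
qed

lemma mult_n_cases:
  fixes s :: int
  assumes "n \<ge> 0"
  shows "s * n = 0 \<or> n \<le> s * n \<or> s * n \<le> - n"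
proof -
  consider "s = 0" | "s \<ge> 1" | "s \<le> -1" by linarith
  then show ?thesis
  proof cases
    case 2 then have "1 * n \<le> s * n" using assms by (intro mult_right_mono) auto
    then show ?thesis by simp
  next
    case 3 then have "s * n \<le> (-1) * n" using assms by (intro mult_right_mono) auto
    then show ?thesis by simp
  qed simp
qed

lemma cross_shift:
  fixes a k c l t N :: int
  assumes "k \<le> N" "l \<le> N" "0 < k" "0 < l"
    and cond: "(a \<le> c \<and> c + l \<le> a + k) \<or> (c \<le> a \<and> a + k \<le> c + l) \<or> (a + k \<le> c \<and> c + l \<le> a + N)"
    and t: "t = 0 \<or> N \<le> t \<or> t \<le> - N"
  shows "\<not> cross a (a + k) (c + t) (c + t + l)"
  using assms unfolding cross_def by linarith

lemma compat_BB_iff: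
  assumes "i < n" "j < n" "1 \<le> k" "k \<le> n" "1 \<le> l" "l \<le> n"
  shows "compatible n (Bd i k) (Bd j l) \<longleftrightarrow>
    (\<forall>x y. x mod int n = int i \<longrightarrow> y mod int n = int j \<longrightarrow> \<not> cross x (x + int k) y (y + int l))"
proof
  assume "compatible n (Bd i k) (Bd j l)"
  then obtain m :: int where cond: "(int i \<le> int j + m * int n \<and> int j + int l + m * int n \<le> int i + int k) \<or>
      (int j + m * int n \<le> int i \<and> int i + int k \<le> int j + int l + m * int n) \<or>
      (int i + int k \<le> int j + m * int n \<and> int j + int l + m * int n \<le> int i + int n)"
    by (auto simp: Let_def)
  show "\<forall>x y. x mod int n = int i \<longrightarrow> y mod int n = int j \<longrightarrow> \<not> cross x (x + int k) y (y + int l)"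
  proof (intro allI impI)
    fix x y assume x: "x mod int n = int i" and y: "y mod int n = int j"
    obtain p where p: "x = int i + p * int n" using x lift_iff[OF assms(1)] by blast
    obtain r where r: "y = int j + r * int n" using y lift_iff[OF assms(2)] by blast
    have t: "(r - p - m) * int n = 0 \<or> int n \<le> (r - p - m) * int n \<or> (r - p - m) * int n \<le> - int n"
      by (rule mult_n_cases) simp
    have "\<not> cross (int i) (int i + int k) ((int j + m * int n) + (r - p - m) * int n) ((int j + m * int n) + (r - p - m) * int n + int l)"
      by (rule cross_shift[where N="int n"]) (use assms cond t in auto)
    moreover have "(int j + m * int n) + (r - p - m) * int n = y - p * int n"
      using r by (simp add: algebra_simps)
    ultimately show "\<not> cross x (x + int k) y (y + int l)" using p unfolding cross_def by auto
  qed
next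
  assume H: "\<forall>x y. x mod int n = int i \<longrightarrow> y mod int n = int j \<longrightarrow> \<not> cross x (x + int k) y (y + int l)"
  define c where "c = int i + (int j - int i) mod int n"
  have cmod: "c mod int n = int j" using assms unfolding c_def by (simp add: mod_add_right_eq)
  have cb: "int i \<le> c" "c < int i + int n" using assms unfolding c_def by auto
  obtain m where m: "c = int j + m * int n" using cmod lift_iff[OF assms(2)] by blast
  have imod: "int i mod int n = int i" "(int i + int n) mod int n = int i" using assms by auto
  have h1: "\<not> cross (int i) (int i + int k) c (c + int l)" using H imod cmod by blast
  have h2: "\<not> cross (int i + int n) (int i + int n + int k) c (c + int l)" using H imod cmod by blast
  show "compatible n (Bd i k) (Bd j l)"
  proof (cases "c + int l \<le> int i + int n")
    case True
    then have "(int i \<le> int j + m * int n \<and> int j + int l + m * int n \<le> int i + int k) \<or>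
      (int j + m * int n \<le> int i \<and> int i + int k \<le> int j + int l + m * int n) \<or>
      (int i + int k \<le> int j + m * int n \<and> int j + int l + m * int n \<le> int i + int n)"
      using h1 cb m assms unfolding cross_def by linarith
    then show ?thesis by (auto simp: Let_def)
  next
    case False
    then have "int j + (m - 1) * int n \<le> int i \<and> int i + int k \<le> int j + int l + (m - 1) * int n"
      using h2 cb m assms unfolding cross_def by (simp add: algebra_simps)
    then show ?thesis by (auto simp: Let_def)
  qed
qed

lemma compat_RB_iff:
  assumes "i < n" "j < n"
  shows "compatible n (Rad j) (Bd i k) \<longleftrightarrow>
    (\<forall>x y. x mod int n = int i \<longrightarrow> y mod int n = int j \<longrightarrow> \<not> (x < y \<and> y < x + int k))"
proof
  assume c: "compatible n (Rad j) (Bd i k)"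
  show "\<forall>x y. x mod int n = int i \<longrightarrow> y mod int n = int j \<longrightarrow> \<not> (x < y \<and> y < x + int k)"
  proof (intro allI impI notI)
    fix x y assume x: "x mod int n = int i" and y: "y mod int n = int j" and xy: "x < y \<and> y < x + int k"
    define t where "t = nat (y - x)"
    have t: "0 < t" "t < k" "int t = y - x" using xy unfolding t_def by auto
    have "int ((i + t) mod n) = (int i + int t) mod int n" by (simp add: zmod_int)
    also have "\<dots> = (x mod int n + (y - x)) mod int n" using x t by simp
    also have "\<dots> = (x + (y - x)) mod int n" by (rule mod_add_left_eq)
    also have "\<dots> = int j" using y by simp
    finally have "(i + t) mod n = j" by simp
    then show False using c t by auto
  qed
next
  assume H: "\<forall>x y. x mod int n = int i \<longrightarrow> y mod int n = int j \<longrightarrow> \<not> (x < y \<and> y < x + int k)"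
  have "\<not> (\<exists>t. 0 < t \<and> t < k \<and> (i + t) mod n = j)"
  proof
    assume "\<exists>t. 0 < t \<and> t < k \<and> (i + t) mod n = j"
    then obtain t where t: "0 < t" "t < k" "(i + t) mod n = j" by blast
    have "int (i + t) mod int n = int j" using t by (metis of_nat_mod)
    moreover have "int i mod int n = int i" using assms by simp
    ultimately have "\<not> (int i < int (i + t) \<and> int (i + t) < int i + int k)" using H by blast
    then show False using t by simp
  qed
  then show "compatible n (Rad j) (Bd i k)" by simp
qed


lemma arcs_Bd: "Bd i k \<in> arcs n \<longleftrightarrow> i < n \<and> 2 \<le> k \<and> k \<le> n"
  by (auto simp: arcs_def)
lemma arcs_Rad: "Rad i \<in> arcs n \<longleftrightarrow> i < n"
  by (auto simp: arcs_def)

lemma compat_BR_sym: "compatible n (Bd i k) (Rad j) = compatible n (Rad j) (Bd i k)"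
  by simp

lemma shift_mod:
  fixes m :: int
  assumes "x mod m = u mod m"
  shows "(y + (u - x)) mod m = y mod m"
proof -
  have "m dvd (u - x)" using assms[symmetric] by (simp add: mod_eq_dvd_iff)
  then obtain c where "u - x = m * c" by blast
  then show ?thesis by simp
qed

definition LB :: "nat \<Rightarrow> parc set \<Rightarrow> (int \<times> int) set" where
  "LB n T = {(x, y). \<exists>i k. Bd i k \<in> T \<and> x mod int n = int i \<and> y = x + int k}"
definition LR :: "nat \<Rightarrow> parc set \<Rightarrow> int set" where
  "LR n T = {x. \<exists>j. Rad j \<in> T \<and> x mod int n = int j}"

lemma tri_props:
  assumes "T \<in> triangulations n"
  shows "T \<subseteq> arcs n" "\<And>\<alpha> \<beta>. \<alpha> \<in> T \<Longrightarrow> \<beta> \<in> T \<Longrightarrow> compatible n \<alpha> \<beta>"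
    "\<And>\<alpha>. \<alpha> \<in> arcs n \<Longrightarrow> (\<And>\<beta>. \<beta> \<in> T \<Longrightarrow> compatible n \<alpha> \<beta>) \<Longrightarrow> \<alpha> \<in> T"
  using assms unfolding triangulations_def by auto

lemma tri_lam:
  assumes n: "n \<ge> 1" and T: "T \<in> triangulations n"
  shows "lam (LB n T) (LR n T) (int n)"
proof
  note TP = tri_props[OF T]
  have n0: "0 < int n" using n by simp
  show "2 \<le> v - u \<and> v - u \<le> int n" if "(u,v) \<in> LB n T" for u v
    using that TP(1) unfolding LB_def by (auto simp: arcs_Bd)
  show "\<not> (u < u' \<and> u' < v \<and> v < v')" if hh: "(u,v) \<in> LB n T" "(u',v') \<in> LB n T" for u v u' v'
  proof -
    obtain i k where a: "Bd i k \<in> T" "u mod int n = int i" "v = u + int k" using hh(1) unfolding LB_def by auto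
    obtain j l where b: "Bd j l \<in> T" "u' mod int n = int j" "v' = u' + int l" using hh(2) unfolding LB_def by auto
    have ar: "i < n" "2 \<le> k" "k \<le> n" "j < n" "2 \<le> l" "l \<le> n" using a(1) b(1) TP(1) by (auto simp: arcs_Bd)
    have "compatible n (Bd i k) (Bd j l)" using TP(2) a b by blast
    then have "\<not> cross u (u + int k) u' (u' + int l)" using compat_BB_iff[of i n j k l] ar a b by auto
    then show ?thesis using a b unfolding cross_def by auto
  qed
  show "\<not> (u < r \<and> r < v)" if hh: "r \<in> LR n T" "(u,v) \<in> LB n T" for r u v
  proof -
    obtain j where a: "Rad j \<in> T" "r mod int n = int j" using hh(1) unfolding LR_def by auto
    obtain i k where b: "Bd i k \<in> T" "u mod int n = int i" "v = u + int k" using hh(2) unfolding LB_def by auto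
    have ar: "i < n" "j < n" using a(1) b(1) TP(1) by (auto simp: arcs_Bd arcs_Rad)
    have "compatible n (Rad j) (Bd i k)" using TP(2) a b by blast
    then show ?thesis using compat_RB_iff[OF ar] a b by auto
  qed
  show "(u,v) \<in> LB n T" if h: "2 \<le> v - u" "v - u \<le> int n"
    "\<And>u' v'. (u',v') \<in> LB n T \<Longrightarrow> \<not> (u < u' \<and> u' < v \<and> v < v') \<and> \<not> (u' < u \<and> u < v' \<and> v' < v)"
    "\<And>r. r \<in> LR n T \<Longrightarrow> \<not> (u < r \<and> r < v)" for u v
  proof -
    define i where "i = nat (u mod int n)"
    define k where "k = nat (v - u)"
    have ui: "u mod int n = int i" using n0 unfolding i_def by simp
    have i_lt: "i < n" using n0 unfolding i_def by (simp add: nat_less_iff)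
    have kv: "v = u + int k" "2 \<le> k" "k \<le> n" using h unfolding k_def by auto
    have arc: "Bd i k \<in> arcs n" using i_lt kv by (simp add: arcs_Bd)
    have "Bd i k \<in> T"
    proof (rule TP(3)[OF arc])
      fix \<beta> assume \<beta>: "\<beta> \<in> T"
      show "compatible n (Bd i k) \<beta>"
      proof (cases \<beta>)
        case (Rad j)
        have j: "j < n" using \<beta> Rad TP(1) by (auto simp: arcs_Rad)
        have "compatible n (Rad j) (Bd i k)"
        proof (subst compat_RB_iff[OF i_lt j], intro allI impI notI)
          fix x y assume x: "x mod int n = int i" and y: "y mod int n = int j" and xy: "x < y \<and> y < x + int k"
          have "(y + (u - x)) mod int n = int j" using shift_mod[of x "int n" u y] x ui y by simp
          then have "y + (u - x) \<in> LR n T" using \<beta> Rad unfolding LR_def by auto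
          then show False using h(4)[of "y + (u - x)"] xy kv by auto
        qed
        then show ?thesis using Rad by simp
      next
        case (Bd j l)
        have jl: "j < n" "2 \<le> l" "l \<le> n" using \<beta> Bd TP(1) by (auto simp: arcs_Bd)
        show ?thesis unfolding Bd
        proof (subst compat_BB_iff, use i_lt kv jl in auto)
          fix x y assume x: "x mod int n = int i" and y: "y mod int n = int j"
            and c: "cross x (x + int k) y (y + int l)"
          have "(y + (u - x)) mod int n = int j" using shift_mod[of x "int n" u y] x ui y by simp
          then have "(y + (u - x), y + (u - x) + int l) \<in> LB n T" using \<beta> Bd unfolding LB_def by auto
          from h(3)[OF this] c kv show False unfolding cross_def by auto
        qed
      qed
    qed
    then show ?thesis using ui kv unfolding LB_def by auto
  qed
  show "r \<in> LR n T" if h: "\<And>u v. (u,v) \<in> LB n T \<Longrightarrow> \<not> (u < r \<and> r < v)" for r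
  proof -
    define j where "j = nat (r mod int n)"
    have rj: "r mod int n = int j" using n0 unfolding j_def by simp
    have j_lt: "j < n" using n0 unfolding j_def by (simp add: nat_less_iff)
    have arc: "Rad j \<in> arcs n" using j_lt by (simp add: arcs_Rad)
    have "Rad j \<in> T"
    proof (rule TP(3)[OF arc])
      fix \<beta> assume \<beta>: "\<beta> \<in> T"
      show "compatible n (Rad j) \<beta>"
      proof (cases \<beta>)
        case (Rad j') then show ?thesis by simp
      next
        case (Bd i k)
        have i: "i < n" using \<beta> Bd TP(1) by (auto simp: arcs_Bd)
        show ?thesis unfolding Bd
        proof (subst compat_RB_iff[OF i j_lt], intro allI impI notI)
          fix x y assume x: "x mod int n = int i" and y: "y mod int n = int j" and xy: "x < y \<and> y < x + int k"
          have "(x + (r - y)) mod int n = int i" using shift_mod[of y "int n" r x] x rj y by simp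
          then have "(x + (r - y), x + (r - y) + int k) \<in> LB n T" using \<beta> Bd unfolding LB_def by auto
          from h[OF this] xy show False by auto
        qed
      qed
    qed
    then show ?thesis using rj unfolding LR_def by auto
  qed
qed


fun start :: "parc \<Rightarrow> nat" where
  "start (Rad i) = i"
| "start (Bd i k) = i"

definition phi :: "nat \<Rightarrow> parc set \<Rightarrow> nat \<Rightarrow> nat" where
  "phi n T i = (if i < n then card {\<alpha> \<in> T. start \<alpha> = i} else 0)"

definition gw :: "nat \<Rightarrow> (nat \<Rightarrow> nat) \<Rightarrow> int \<Rightarrow> int" where
  "gw n a x = int (a (nat (x mod int n))) - 1"

definition W :: "nat \<Rightarrow> (nat \<Rightarrow> nat) \<Rightarrow> int \<Rightarrow> int" where
  "W n a x = (if 0 \<le> x then (\<Sum>y\<in>{0..<x}. gw n a y) else - (\<Sum>y\<in>{x..<0}. gw n a y))"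

lemma W_step: "W n a (x + 1) = W n a x + gw n a x"
proof (cases "0 \<le> x")
  case True
  have "{0..<x+1} = insert x {0..<x}" using True by auto
  then show ?thesis using True unfolding W_def by simp
next
  case False
  show ?thesis
  proof (cases "x + 1 = 0")
    case True
    have "{x..<0} = {x}" using True by auto
    then show ?thesis using True False unfolding W_def by simp
  next
    case F2: False
    have "{x..<0} = insert x {x+1..<0}" using False by auto
    then show ?thesis using False F2 unfolding W_def by simp
  qed
qed

lemma W_diff: "p \<le> q \<Longrightarrow> W n a q - W n a p = (\<Sum>y\<in>{p..<q}. gw n a y)"
proof (induction q rule: int_ge_induct)
  case base then show ?case by simp
next
  case (step q)
  have "{p..<q+1} = insert q {p..<q}" using step by auto
  then show ?case using step W_step[of n a q] by simp
qed

lemma psum: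
  assumes n: "n \<ge> 1"
  shows "(\<Sum>x\<in>{r..<r + int n}. f (nat (x mod int n))) = (\<Sum>i<n. f i)"
proof -
  have bij: "bij_betw (\<lambda>x. nat (x mod int n)) {r..<r + int n} {..<n}"
  proof (rule bij_betwI')
    fix x y assume x: "x \<in> {r..<r + int n}" and y: "y \<in> {r..<r + int n}"
    show "(nat (x mod int n) = nat (y mod int n)) = (x = y)"
    proof
      assume "nat (x mod int n) = nat (y mod int n)"
      moreover have "0 \<le> x mod int n" "0 \<le> y mod int n" using n by simp_all
      ultimately have "x mod int n = y mod int n" by simp
      then have "int n dvd (x - y)" by (simp add: mod_eq_dvd_iff)
      then obtain c where c: "x - y = int n * c" by blast
      have "\<bar>x - y\<bar> < int n" using x y by auto
      moreover have "c * int n = 0 \<or> int n \<le> c * int n \<or> c * int n \<le> - int n" by (rule mult_n_cases) simp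
      ultimately have "x - y = 0" using c by (auto simp: mult.commute)
      then show "x = y" by simp
    qed simp
  next
    fix x assume "x \<in> {r..<r + int n}"
    show "nat (x mod int n) \<in> {..<n}" using n by (simp add: nat_less_iff)
  next
    fix i assume i: "i \<in> {..<n}"
    define x where "x = r + (int i - r) mod int n"
    have "x \<in> {r..<r + int n}" using n unfolding x_def by auto
    moreover have "i = nat (x mod int n)" using i unfolding x_def by (simp add: mod_add_right_eq)
    ultimately show "\<exists>x\<in>{r..<r + int n}. i = nat (x mod int n)" by blast
  qed
  show ?thesis using sum.reindex_bij_betw[OF bij, of f] by simp
qed

lemma W_per:
  assumes n: "n \<ge> 1" and sa: "(\<Sum>i<n. a i) = n"
  shows "W n a (x + int n) = W n a x"
proof -
  have "W n a (x + int n) - W n a x = (\<Sum>y\<in>{x..<x + int n}. gw n a y)" by (rule W_diff) simp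
  also have "\<dots> = (\<Sum>i<n. int (a i) - 1)" unfolding gw_def by (rule psum[OF n])
  also have "\<dots> = int (\<Sum>i<n. a i) - int n" by (simp add: sum_subtractf)
  finally show ?thesis using sa by simp
qed

lemma W_per_mult:
  assumes n: "n \<ge> 1" and sa: "(\<Sum>i<n. a i) = n"
  shows "W n a (x + p * int n) = W n a (x::int)"
proof -
  have pos: "W n a (x + int m * int n) = W n a x" for m :: nat and x :: int
  proof (induction m arbitrary: x)
    case 0 then show ?case by simp
  next
    case (Suc m)
    have "W n a (x + int (Suc m) * int n) = W n a ((x + int m * int n) + int n)"
      by (rule arg_cong[where f="W n a"]) (simp add: algebra_simps)
    also have "\<dots> = W n a (x + int m * int n)" by (rule W_per[OF n sa])
    also have "\<dots> = W n a x" by (rule Suc.IH)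
    finally show ?case .
  qed
  show ?thesis
  proof (cases "0 \<le> p")
    case True then show ?thesis using pos[where m="nat p" and x=x] by simp
  next
    case False
    have eq: "(x + p * int n) + int (nat (-p)) * int n = x" using False by (simp add: algebra_simps)
    have "W n a x = W n a (x + p * int n)" using pos[where m="nat (-p)" and x="x + p * int n"] unfolding eq .
    then show ?thesis by simp
  qed
qed

lemma W_cong:
  assumes n: "n \<ge> 1" and sa: "(\<Sum>i<n. a i) = n" and xy: "x mod int n = y mod int n"
  shows "W n a (x + c) = W n a (y + c) + (W n a x - W n a y)"
proof -
  have "int n dvd (x - y)" using xy by (simp add: mod_eq_dvd_iff)
  then obtain p where p: "x - y = int n * p" by blast
  have "W n a (x + c) = W n a ((y + c) + p * int n)" using p by (simp add: algebra_simps)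
  also have "\<dots> = W n a (y + c)" by (rule W_per_mult[OF n sa])
  finally have 1: "W n a (x + c) = W n a (y + c)" .
  have "W n a x = W n a (y + p * int n)" using p by (simp add: algebra_simps)
  also have "\<dots> = W n a y" by (rule W_per_mult[OF n sa])
  finally show ?thesis using 1 by simp
qed


lemma arcs_fin: "finite (arcs n)"
proof -
  have "arcs n \<subseteq> Rad ` {..<n} \<union> (\<lambda>(i,k). Bd i k) ` ({..<n} \<times> {..n})"
    unfolding arcs_def by auto
  then show ?thesis using finite_subset by blast
qed

lemma tri_fin: "T \<in> triangulations n \<Longrightarrow> finite T"
  using tri_props(1) arcs_fin finite_subset by blast

lemma phi_split:
  assumes fin: "finite T" and i: "i < n"
  shows "phi n T i = card {k. Bd i k \<in> T} + (if Rad i \<in> T then 1 else 0)"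
proof -
  have eq: "{\<alpha> \<in> T. start \<alpha> = i} = Bd i ` {k. Bd i k \<in> T} \<union> {\<alpha>. \<alpha> = Rad i \<and> Rad i \<in> T}"
  proof
    show "{\<alpha> \<in> T. start \<alpha> = i} \<subseteq> Bd i ` {k. Bd i k \<in> T} \<union> {\<alpha>. \<alpha> = Rad i \<and> Rad i \<in> T}"
    proof
      fix \<alpha> assume "\<alpha> \<in> {\<alpha> \<in> T. start \<alpha> = i}"
      then show "\<alpha> \<in> Bd i ` {k. Bd i k \<in> T} \<union> {\<alpha>. \<alpha> = Rad i \<and> Rad i \<in> T}" by (cases \<alpha>) auto
    qed
  qed auto
  have finK: "finite {k. Bd i k \<in> T}"
  proof (rule finite_imageD)
    show "finite (Bd i ` {k. Bd i k \<in> T})" using fin by (rule finite_subset[rotated]) auto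
    show "inj_on (Bd i) {k. Bd i k \<in> T}" by (auto simp: inj_on_def)
  qed
  have "card {\<alpha> \<in> T. start \<alpha> = i} = card (Bd i ` {k. Bd i k \<in> T}) + card {\<alpha>. \<alpha> = Rad i \<and> Rad i \<in> T}"
    unfolding eq by (rule card_Un_disjoint) (use finK in auto)
  moreover have "card (Bd i ` {k. Bd i k \<in> T}) = card {k. Bd i k \<in> T}"
    by (rule card_image) (auto simp: inj_on_def)
  moreover have "card {\<alpha>. \<alpha> = Rad i \<and> Rad i \<in> T} = (if Rad i \<in> T then 1 else 0)" by auto
  ultimately show ?thesis using i unfolding phi_def by simp
qed

lemma card_T_phi:
  assumes T: "T \<subseteq> arcs n" "finite T"
  shows "card T = (\<Sum>i<n. phi n T i)"
proof -
  have "T = (\<Union>i\<in>{..<n}. {\<alpha> \<in> T. start \<alpha> = i})"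
  proof
    show "T \<subseteq> (\<Union>i\<in>{..<n}. {\<alpha> \<in> T. start \<alpha> = i})"
    proof
      fix \<alpha> assume a: "\<alpha> \<in> T"
      then have "start \<alpha> < n" using T by (cases \<alpha>) (auto simp: arcs_def)
      then show "\<alpha> \<in> (\<Union>i\<in>{..<n}. {\<alpha> \<in> T. start \<alpha> = i})" using a by auto
    qed
  qed auto
  then have "card T = card (\<Union>i\<in>{..<n}. {\<alpha> \<in> T. start \<alpha> = i})" by simp
  also have "\<dots> = (\<Sum>i<n. card {\<alpha> \<in> T. start \<alpha> = i})"
    by (rule card_UN_disjoint) (use T in auto)
  also have "\<dots> = (\<Sum>i<n. phi n T i)" unfolding phi_def by simp
  finally show ?thesis .
qed

definition psi :: "nat \<Rightarrow> (nat \<Rightarrow> nat) \<Rightarrow> parc set" where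
  "psi n a = {Rad i | i. i < n \<and> (\<forall>m. 1 \<le> m \<and> m \<le> n \<longrightarrow> W n a (int i) \<le> W n a (int i + int m))} \<union>
    {Bd i m | i m. i < n \<and> 2 \<le> m \<and> m \<le> n \<and> W n a (int i) - 1 \<le> W n a (int i + int m) \<and>
       (\<forall>t. 0 < t \<and> t < m \<longrightarrow> W n a (int i + int m) < W n a (int i + int t))}"

context
  fixes n :: nat and T :: "parc set"
  assumes n: "n \<ge> 1" and T: "T \<in> triangulations n"
begin

interpretation L: lam "LB n T" "LR n T" "int n" by (rule tri_lam[OF n T])

lemma n0: "0 < int n" using n by simp

lemma finT: "finite T" using tri_fin[OF T] .

lemma LB_row: "{v. (x,v) \<in> LB n T} = (\<lambda>k. x + int k) ` {k. Bd (nat (x mod int n)) k \<in> T}"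
proof -
  have "(x mod int n = int i) = (i = nat (x mod int n))" for i using n0 by auto
  then show ?thesis unfolding LB_def by auto
qed

lemma LB_row_card: "card {v. (x,v) \<in> LB n T} = card {k. Bd (nat (x mod int n)) k \<in> T}"
  unfolding LB_row by (rule card_image) (auto simp: inj_on_def)

lemma LB_row_fin: "finite {v. (x,v) \<in> LB n T}"
proof -
  have "{v. (x,v) \<in> LB n T} \<subseteq> {x..x + int n}" using L.len by fastforce
  then show ?thesis using finite_subset by blast
qed

lemma LR_mem: "x \<in> LR n T \<longleftrightarrow> Rad (nat (x mod int n)) \<in> T"
proof -
  have "(x mod int n = int j) = (j = nat (x mod int n))" for j using n0 by auto
  then show ?thesis unfolding LR_def by auto
qed

lemma pt_count: "int (phi n T (nat (x mod int n))) = int (card {v. (x,v) \<in> LB n T}) + (if x \<in> LR n T then 1 else 0)"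
proof -
  have "nat (x mod int n) < n" using n0 by (simp add: nat_less_iff)
  then show ?thesis using phi_split[OF finT] LB_row_card LR_mem by simp
qed

lemma win_fin: "finite {(u,v). (u,v) \<in> LB n T \<and> p \<le> u \<and> u < q}"
proof -
  have "{(u,v). (u,v) \<in> LB n T \<and> p \<le> u \<and> u < q} \<subseteq> {p..q} \<times> {p..q + int n}"
    using L.len by fastforce
  then show ?thesis using finite_subset by blast
qed

lemma win_count:
  assumes "p \<le> q"
  shows "W n (phi n T) q - W n (phi n T) p =
    int (card {(u,v). (u,v) \<in> LB n T \<and> p \<le> u \<and> u < q}) + int (card {x. x \<in> LR n T \<and> p \<le> x \<and> x < q}) - (q - p)"
proof -
  have "W n (phi n T) q - W n (phi n T) p = (\<Sum>y\<in>{p..<q}. gw n (phi n T) y)" by (rule W_diff[OF assms])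
  also have "\<dots> = (\<Sum>y\<in>{p..<q}. int (card {v. (y,v) \<in> LB n T})) + (\<Sum>y\<in>{p..<q}. (if y \<in> LR n T then 1 else 0)) - (\<Sum>y\<in>{p..<q}. 1)"
    unfolding gw_def pt_count by (simp add: sum.distrib sum_subtractf)
  also have "(\<Sum>y\<in>{p..<q}. int (card {v. (y,v) \<in> LB n T})) = int (card (Sigma {p..<q} (\<lambda>y. {v. (y,v) \<in> LB n T})))"
    by (subst card_SigmaI) (auto simp: LB_row_fin)
  also have "Sigma {p..<q} (\<lambda>y. {v. (y,v) \<in> LB n T}) = {(u,v). (u,v) \<in> LB n T \<and> p \<le> u \<and> u < q}" by auto
  also have "(\<Sum>y\<in>{p..<q}. (if y \<in> LR n T then 1 else 0)) = int (card {x. x \<in> LR n T \<and> p \<le> x \<and> x < q})"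
  proof -
    have "(\<Sum>y\<in>{y \<in> {p..<q}. y \<in> LR n T}. (1::int)) = (\<Sum>y\<in>{p..<q}. (if y \<in> LR n T then 1 else 0))"
      by (rule sum.inter_filter) simp
    then have "(\<Sum>y\<in>{p..<q}. (if y \<in> LR n T then 1 else 0)) = (\<Sum>y\<in>{y \<in> {p..<q}. y \<in> LR n T}. (1::int))"
      by simp
    also have "{y \<in> {p..<q}. y \<in> LR n T} = {x. x \<in> LR n T \<and> p \<le> x \<and> x < q}" by auto
    finally show ?thesis by simp
  qed
  finally show ?thesis using assms by simp
qed


lemma lowR:
  assumes r: "r \<in> LR n T" and m: "1 \<le> m"
  shows "W n (phi n T) r \<le> W n (phi n T) (r + m)"
proof -
  have P: "\<And>u v. (u,v) \<in> LB n T \<Longrightarrow> u < r \<Longrightarrow> r < v \<Longrightarrow> r + m \<le> v"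
    using L.radok[OF r] by blast
  have lb: "r + m - r - 1 \<le> int (card (L.AB r (r+m))) + int (card (L.AR r (r+m)))"
    by (rule L.LB_low) (use m P in auto)
  have c1: "card (L.AB r (r+m)) \<le> card {(u,v). (u,v) \<in> LB n T \<and> r \<le> u \<and> u < r + m}"
    by (rule card_mono[OF win_fin]) (auto simp: L.AB_def)
  have finR: "finite {x. x \<in> LR n T \<and> r \<le> x \<and> x < r + m}"
    by (rule finite_subset[of _ "{r..<r+m}"]) auto
  have "card (insert r (L.AR r (r+m))) \<le> card {x. x \<in> LR n T \<and> r \<le> x \<and> x < r + m}"
    by (rule card_mono[OF finR]) (use r m in \<open>auto simp: L.AR_def\<close>)
  moreover have "card (insert r (L.AR r (r+m))) = card (L.AR r (r+m)) + 1"
    using L.AR_fin by (simp add: L.AR_def)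
  ultimately have c2: "card (L.AR r (r+m)) + 1 \<le> card {x. x \<in> LR n T \<and> r \<le> x \<and> x < r + m}" by simp
  show ?thesis using win_count[of r "r + m"] m lb c1 c2 by simp
qed

lemma lowB:
  assumes b: "(x, y) \<in> LB n T"
  shows "W n (phi n T) x - 1 \<le> W n (phi n T) y"
proof -
  have xy: "x < y" using L.len[OF b] by simp
  have P: "\<And>u v. (u,v) \<in> LB n T \<Longrightarrow> u < x \<Longrightarrow> x < v \<Longrightarrow> y \<le> v"
    using L.lamin b by fastforce
  have lb: "y - x - 1 \<le> int (card (L.AB x y)) + int (card (L.AR x y))"
    by (rule L.LB_low) (use xy P in auto)
  have c1: "card (L.AB x y) \<le> card {(u,v). (u,v) \<in> LB n T \<and> x \<le> u \<and> u < y}"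
    by (rule card_mono[OF win_fin]) (auto simp: L.AB_def)
  have finR: "finite {z. z \<in> LR n T \<and> x \<le> z \<and> z < y}"
    by (rule finite_subset[of _ "{x..<y}"]) auto
  have c2: "card (L.AR x y) \<le> card {z. z \<in> LR n T \<and> x \<le> z \<and> z < y}"
    by (rule card_mono[OF finR]) (auto simp: L.AR_def)
  show ?thesis using win_count[of x y] xy lb c1 c2 by simp
qed

lemma upB:
  assumes b: "(x, y) \<in> LB n T" and z: "x < z" "z < y"
  shows "W n (phi n T) y < W n (phi n T) z"
proof -
  let ?F = "{(u,v). (u,v) \<in> LB n T \<and> z \<le> u \<and> u < y}"
  have F: "?F \<subseteq> {(u,v). (u,v) \<in> LB n T \<and> z \<le> u \<and> v \<le> y}"
  proof
    fix p assume p: "p \<in> ?F"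
    obtain u v where uv: "p = (u,v)" by (cases p)
    have "\<not> (x < u \<and> u < y \<and> y < v)" using L.lamin[OF b, of u v] p uv by auto
    then show "p \<in> {(u,v). (u,v) \<in> LB n T \<and> z \<le> u \<and> v \<le> y}" using p uv z by auto
  qed
  have "finite ?F \<and> finite {} \<and> int (card ?F) + int (card {}) \<le> y - z - 1"
    using L.LB_up[of z y ?F "{}"] z F by auto
  moreover have "{w. w \<in> LR n T \<and> z \<le> w \<and> w < y} = {}"
    using L.radok[of _ x y] b z by fastforce
  moreover have "W n (phi n T) y - W n (phi n T) z = int (card ?F) + int (card {w. w \<in> LR n T \<and> z \<le> w \<and> w < y}) - (y - z)"
    by (rule win_count) (use z in simp)
  ultimately show ?thesis by (simp only: card.empty) linarith
qed

lemma card_T: "card T = n"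
proof -
  obtain r where r: "r \<in> LR n T" using L.R_nonempty by blast
  have low: "W n (phi n T) r \<le> W n (phi n T) (r + int n)" using lowR[OF r] n by simp
  let ?F = "{(u,v). (u,v) \<in> LB n T \<and> r \<le> u \<and> u < r + int n}"
  let ?Rs = "{x. x \<in> LR n T \<and> r < x \<and> x < r + int n}"
  have rn: "r + int n \<in> LR n T" using r unfolding LR_mem by simp
  have F: "?F \<subseteq> {(u,v). (u,v) \<in> LB n T \<and> r \<le> u \<and> v \<le> r + int n}"
  proof
    fix p assume p: "p \<in> ?F"
    obtain u v where uv: "p = (u,v)" by (cases p)
    have "v \<le> r + int n"
    proof (cases "u = r")
      case True then show ?thesis using L.len[of u v] p uv by auto
    next
      case False
      then have "r < u" using p uv by auto
      then show ?thesis using L.radok[OF rn, of u v] p uv by auto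
    qed
    then show "p \<in> {(u,v). (u,v) \<in> LB n T \<and> r \<le> u \<and> v \<le> r + int n}" using p uv by auto
  qed
  have up: "finite ?F \<and> finite ?Rs \<and> int (card ?F) + int (card ?Rs) \<le> r + int n - r - 1"
    by (rule L.LB_up) (use F n in auto)
  have "{x. x \<in> LR n T \<and> r \<le> x \<and> x < r + int n} = insert r ?Rs" using r n by auto
  then have "card {x. x \<in> LR n T \<and> r \<le> x \<and> x < r + int n} = card ?Rs + 1" using up by simp
  then have "W n (phi n T) (r + int n) - W n (phi n T) r \<le> 0" using win_count[of r "r + int n"] up by simp
  then have "W n (phi n T) (r + int n) - W n (phi n T) r = 0" using low by simp
  then have "(\<Sum>y\<in>{r..<r + int n}. gw n (phi n T) y) = 0" using W_diff[of r "r + int n"] by simp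
  moreover have "(\<Sum>y\<in>{r..<r + int n}. gw n (phi n T) y) = (\<Sum>i<n. int (phi n T i) - 1)"
    unfolding gw_def by (rule psum[OF n])
  ultimately have "(\<Sum>i<n. int (phi n T i) - 1) = 0" by simp
  then have "(\<Sum>i<n. int (phi n T i)) = int n" by (simp add: sum_subtractf)
  then have "int (\<Sum>i<n. phi n T i) = int n" by (simp add: of_nat_sum)
  then have "(\<Sum>i<n. phi n T i) = n" by (simp only: of_nat_eq_iff)
  then show ?thesis using card_T_phi[OF tri_props(1)[OF T] finT] by simp
qed

lemma T_sub_psi: "T \<subseteq> psi n (phi n T)"
proof
  fix \<alpha> assume a: "\<alpha> \<in> T"
  show "\<alpha> \<in> psi n (phi n T)"
  proof (cases \<alpha>)
    case (Rad i)
    have i: "i < n" using a Rad tri_props(1)[OF T] by (auto simp: arcs_Rad)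
    have "int i \<in> LR n T" using a Rad i unfolding LR_mem by simp
    then have "\<forall>m. 1 \<le> m \<and> m \<le> n \<longrightarrow> W n (phi n T) (int i) \<le> W n (phi n T) (int i + int m)"
      using lowR by simp
    then show ?thesis using Rad i unfolding psi_def by auto
  next
    case (Bd i m)
    have im: "i < n" "2 \<le> m" "m \<le> n" using a Bd tri_props(1)[OF T] by (auto simp: arcs_Bd)
    have b: "(int i, int i + int m) \<in> LB n T" using a Bd im unfolding LB_def by auto
    have "W n (phi n T) (int i) - 1 \<le> W n (phi n T) (int i + int m)" by (rule lowB[OF b])
    moreover have "\<forall>t. 0 < t \<and> t < m \<longrightarrow> W n (phi n T) (int i + int m) < W n (phi n T) (int i + int t)"
      using upB[OF b] by simp
    ultimately show ?thesis using Bd im unfolding psi_def by auto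
  qed
qed

end


definition comps :: "nat \<Rightarrow> (nat \<Rightarrow> nat) set" where
  "comps n = {a. (\<forall>i. n \<le> i \<longrightarrow> a i = 0) \<and> (\<Sum>i<n. a i) = n}"

lemma psi_arcs: "psi n a \<subseteq> arcs n"
  unfolding psi_def arcs_def by auto

lemma walk_count:
  fixes f :: "nat \<Rightarrow> int"
  assumes stp: "\<And>m. f m - 1 \<le> f (Suc m)" and N: "1 \<le> N"
  shows "card {m. 2 \<le> m \<and> m \<le> N \<and> c \<le> f m \<and> (\<forall>t. 0 < t \<and> t < m \<longrightarrow> f m < f t)}
         = nat (f 1 - max c (Min (f ` {1..N})))"
  using N
proof (induction N rule: dec_induct)
  case base
  have "{m. 2 \<le> m \<and> m \<le> 1 \<and> c \<le> f m \<and> (\<forall>t. 0 < t \<and> t < m \<longrightarrow> f m < f t)} = {}" by auto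
  then show ?case by simp
next
  case (step N)
  let ?S = "\<lambda>N. {m. 2 \<le> m \<and> m \<le> N \<and> c \<le> f m \<and> (\<forall>t. 0 < t \<and> t < m \<longrightarrow> f m < f t)}"
  define M where "M = Min (f ` {1..N})"
  have finS: "finite (?S N)" by (rule finite_subset[of _ "{..N}"]) auto
  have Mle: "M \<le> f t" if "1 \<le> t" "t \<le> N" for t unfolding M_def using that by (intro Min_le) auto
  have Min_in: "M \<in> f ` {1..N}" unfolding M_def using step.hyps by (intro Min_in) auto
  have M1: "M \<le> f 1" using Mle step.hyps by simp
  have MN: "M \<le> f N" using Mle step.hyps by simp
  have newMin: "Min (f ` {1..Suc N}) = min M (f (Suc N))"
  proof -
    have "f ` {1..Suc N} = insert (f (Suc N)) (f ` {1..N})" using step.hyps by (auto simp: atLeastAtMostSuc_conv)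
    then show ?thesis unfolding M_def using step.hyps by (simp add: min.commute)
  qed
  have cond_iff: "(\<forall>t. 0 < t \<and> t < Suc N \<longrightarrow> f (Suc N) < f t) \<longleftrightarrow> f (Suc N) < M"
  proof
    assume "\<forall>t. 0 < t \<and> t < Suc N \<longrightarrow> f (Suc N) < f t"
    then show "f (Suc N) < M" using Min_in by auto
  next
    assume fl: "f (Suc N) < M"
    show "\<forall>t. 0 < t \<and> t < Suc N \<longrightarrow> f (Suc N) < f t"
    proof (intro allI impI)
      fix t assume "0 < t \<and> t < Suc N"
      then have "M \<le> f t" using Mle[of t] by simp
      then show "f (Suc N) < f t" using fl by simp
    qed
  qed
  have SS: "?S (Suc N) = ?S N \<union> (if c \<le> f (Suc N) \<and> f (Suc N) < M then {Suc N} else {})"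
  proof -
    have "?S (Suc N) = ?S N \<union> {m. m = Suc N \<and> 2 \<le> m \<and> c \<le> f m \<and> (\<forall>t. 0 < t \<and> t < m \<longrightarrow> f m < f t)}"
      by (auto simp: le_Suc_eq)
    also have "{m. m = Suc N \<and> 2 \<le> m \<and> c \<le> f m \<and> (\<forall>t. 0 < t \<and> t < m \<longrightarrow> f m < f t)}
        = (if c \<le> f (Suc N) \<and> f (Suc N) < M then {Suc N} else {})"
      using cond_iff step.hyps by auto
    finally show ?thesis .
  qed
  show ?case
  proof (cases "f (Suc N) < M")
    case True
    have fe: "f (Suc N) = M - 1" using True stp[of N] MN by simp
    show ?thesis
    proof (cases "c \<le> M - 1")
      case True
      have "card (?S (Suc N)) = card (?S N) + 1"
        unfolding SS using fe True finS by simp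
      then show ?thesis using step.IH newMin fe True M1 unfolding M_def by simp
    next
      case False
      have "?S (Suc N) = ?S N" unfolding SS using fe False by simp
      then show ?thesis using step.IH newMin fe False unfolding M_def by (simp add: max_def)
    qed
  next
    case False
    have "?S (Suc N) = ?S N" unfolding SS using False by simp
    then show ?thesis using step.IH newMin False unfolding M_def by (simp add: min_def)
  qed
qed

context
  fixes n :: nat and a :: "nat \<Rightarrow> nat"
  assumes n: "n \<ge> 1" and a: "a \<in> comps n"
begin

lemma sa: "(\<Sum>i<n. a i) = n" using a unfolding comps_def by simp

lemma radmin:
  assumes "Rad i \<in> psi n a"
  shows "W n a (int i) \<le> W n a y"
proof -
  have H: "\<forall>m. 1 \<le> m \<and> m \<le> n \<longrightarrow> W n a (int i) \<le> W n a (int i + int m)"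
    using assms unfolding psi_def by auto
  define m where "m = (y - int i - 1) mod int n + 1"
  define p where "p = (y - int i - 1) div int n"
  have mb: "(y - int i - 1) mod int n < int n" "0 \<le> (y - int i - 1) mod int n" using n by simp_all
  have m: "1 \<le> m" "m \<le> int n" unfolding m_def using mb by linarith+
  have y: "y = (int i + m) + p * int n" unfolding m_def p_def by (simp add: algebra_simps)
  have e1: "W n a y = W n a (int i + m)" unfolding y by (rule W_per_mult[OF n sa])
  have hm: "1 \<le> nat m \<and> nat m \<le> n" using m by auto
  have "W n a (int i) \<le> W n a (int i + int (nat m))" using H hm by blast
  moreover have "int (nat m) = m" using m by simp
  ultimately have "W n a (int i) \<le> W n a (int i + m)" by simp
  then show ?thesis using e1 by simp
qed

lemma bdlift:
  assumes "Bd i m \<in> psi n a" "x mod int n = int i"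
  shows "W n a x - 1 \<le> W n a (x + int m)" "\<And>t. 0 < t \<Longrightarrow> t < m \<Longrightarrow> W n a (x + int m) < W n a (x + int t)"
proof -
  have H: "i < n" "W n a (int i) - 1 \<le> W n a (int i + int m)"
    "\<forall>t. 0 < t \<and> t < m \<longrightarrow> W n a (int i + int m) < W n a (int i + int t)"
    using assms(1) unfolding psi_def by auto
  have xi: "x mod int n = int i mod int n" using assms(2) H(1) by simp
  have C: "W n a (x + c) = W n a (int i + c) + (W n a x - W n a (int i))" for c
    by (rule W_cong[OF n sa xi])
  show "W n a x - 1 \<le> W n a (x + int m)" using C[of "int m"] H by simp
  show "W n a (x + int m) < W n a (x + int t)" if "0 < t" "t < m" for t
    using C[of "int m"] C[of "int t"] H that by simp
qed

lemma radlift: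
  assumes "Rad j \<in> psi n a" "y mod int n = int j"
  shows "W n a y \<le> W n a z"
proof -
  have j: "j < n" using assms unfolding psi_def by auto
  obtain p where p: "y = int j + p * int n" using assms(2) lift_iff[OF j] by blast
  have "W n a y = W n a (int j)" unfolding p by (rule W_per_mult[OF n sa])
  then show ?thesis using radmin[OF assms(1), of z] by simp
qed

lemma psi_compat:
  assumes al: "\<alpha> \<in> psi n a" and be: "\<beta> \<in> psi n a"
  shows "compatible n \<alpha> \<beta>"
proof -
  have RB: "compatible n (Rad j) (Bd i k)" if r: "Rad j \<in> psi n a" and b: "Bd i k \<in> psi n a" for i j k
  proof -
    have ij: "i < n" "j < n" using r b unfolding psi_def by auto
    show ?thesis
    proof (subst compat_RB_iff[OF ij], intro allI impI notI)
      fix x y assume x: "x mod int n = int i" and y: "y mod int n = int j" and xy: "x < y \<and> y < x + int k"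
      define t where "t = nat (y - x)"
      have t: "0 < t" "t < k" "x + int t = y" using xy unfolding t_def by auto
      have "W n a (x + int k) < W n a y" using bdlift(2)[OF b x t(1,2)] t(3) by simp
      moreover have "W n a y \<le> W n a (x + int k)" by (rule radlift[OF r y])
      ultimately show False by simp
    qed
  qed
  have BB: "compatible n (Bd i k) (Bd j l)" if b1: "Bd i k \<in> psi n a" and b2: "Bd j l \<in> psi n a" for i j k l
  proof -
    have p: "i < n" "j < n" "1 \<le> k" "k \<le> n" "1 \<le> l" "l \<le> n" using b1 b2 unfolding psi_def by auto
    have nc: "\<not> (x < y \<and> y < x + int k \<and> x + int k < y + int l)"
      if bx: "Bd i k \<in> psi n a" "x mod int n = int i" and "Bd j l \<in> psi n a" "y mod int n = int j"
      for i j k l x y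
    proof
      assume c: "x < y \<and> y < x + int k \<and> x + int k < y + int l"
      define t where "t = nat (y - x)"
      have t: "0 < t" "t < k" "x + int t = y" using c unfolding t_def by auto
      define s where "s = nat (x + int k - y)"
      have s: "0 < s" "s < l" "y + int s = x + int k" using c unfolding s_def by auto
      have "W n a (x + int k) < W n a y" using bdlift(2)[OF bx t(1,2)] t(3) by simp
      moreover have "W n a (y + int l) < W n a (x + int k)" using bdlift(2)[OF that(3,4) s(1,2)] s(3) by simp
      moreover have "W n a y - 1 \<le> W n a (y + int l)" using bdlift(1)[OF that(3,4)] .
      ultimately show False by simp
    qed
    show ?thesis
    proof (subst compat_BB_iff[OF p], intro allI impI)
      fix x y assume x: "x mod int n = int i" and y: "y mod int n = int j"
      show "\<not> cross x (x + int k) y (y + int l)"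
        unfolding cross_def using nc[OF b1 x b2 y] nc[OF b2 y b1 x] by auto
    qed
  qed
  show ?thesis
  proof (cases \<alpha>)
    case (Rad j)
    show ?thesis
    proof (cases \<beta>)
      case (Rad j') then show ?thesis using \<open>\<alpha> = Rad j\<close> by simp
    next
      case (Bd i k) then show ?thesis using RB al be \<open>\<alpha> = Rad j\<close> by simp
    qed
  next
    case (Bd i k)
    show ?thesis
    proof (cases \<beta>)
      case (Rad j) then show ?thesis using RB[of j i k] al be \<open>\<alpha> = Bd i k\<close> by simp
    next
      case (Bd j l) then show ?thesis using BB al be \<open>\<alpha> = Bd i k\<close> by simp
    qed
  qed
qed

lemma psi_count: "phi n (psi n a) = a"
proof
  fix i
  show "phi n (psi n a) i = a i"
  proof (cases "i < n")
    case False then show ?thesis using a unfolding phi_def comps_def by auto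
  next
    case True
    have finP: "finite (psi n a)" using psi_arcs arcs_fin finite_subset by blast
    define f where "f m = W n a (int i + int m) - W n a (int i)" for m
    have f_step: "f m - 1 \<le> f (Suc m)" for m
    proof -
      have e: "int i + int (Suc m) = (int i + int m) + 1" by simp
      have "f (Suc m) = f m + gw n a (int i + int m)" unfolding f_def e W_step by simp
      then show ?thesis unfolding gw_def by simp
    qed
    have f1: "f 1 = int (a i) - 1" unfolding f_def using W_step[of n a "int i"] True by (simp add: gw_def)
    have fn: "f n = 0" unfolding f_def using W_per[OF n sa] by simp
    define M where "M = Min (f ` {1..n})"
    have Mle: "M \<le> f t" if "1 \<le> t" "t \<le> n" for t unfolding M_def using that by (intro Min_le) auto
    have Min_in: "M \<in> f ` {1..n}" unfolding M_def using n by (intro Min_in) auto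
    have M0: "M \<le> 0" using Mle[of n] n fn by simp
    have Bset: "{k. Bd i k \<in> psi n a} = {m. 2 \<le> m \<and> m \<le> n \<and> -1 \<le> f m \<and> (\<forall>t. 0 < t \<and> t < m \<longrightarrow> f m < f t)}"
      unfolding psi_def f_def using True by auto
    have cardB: "card {k. Bd i k \<in> psi n a} = nat (f 1 - max (-1) M)"
      unfolding Bset M_def by (rule walk_count[of f, OF f_step n])
    have Rad_iff: "Rad i \<in> psi n a \<longleftrightarrow> 0 \<le> M"
    proof
      assume "Rad i \<in> psi n a"
      then have "\<forall>m. 1 \<le> m \<and> m \<le> n \<longrightarrow> 0 \<le> f m" unfolding psi_def f_def by auto
      then show "0 \<le> M" using Min_in by auto
    next
      assume "0 \<le> M"
      then have "\<forall>m. 1 \<le> m \<and> m \<le> n \<longrightarrow> 0 \<le> f m" using Mle by force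
      then show "Rad i \<in> psi n a" unfolding psi_def f_def using True by auto
    qed
    have "phi n (psi n a) i = nat (f 1 - max (-1) M) + (if 0 \<le> M then 1 else 0)"
      using phi_split[OF finP True] cardB Rad_iff by simp
    also have "\<dots> = a i"
    proof (cases "0 \<le> M")
      case True
      then have "M = 0" using M0 by simp
      moreover have "0 \<le> f 1" using Mle[of 1] n \<open>M = 0\<close> by simp
      ultimately show ?thesis using f1 by simp
    next
      case False
      then have "max (-1) M = -1" by simp
      then show ?thesis using f1 False by simp
    qed
    finally show ?thesis .
  qed
qed

end


lemma compat_refl: "\<alpha> \<in> arcs n \<Longrightarrow> compatible n \<alpha> \<alpha>"
proof (cases \<alpha>)
  case (Rad i) then show ?thesis by simp
next
  case (Bd i k)
  have "let a = int i; b = int i + int k; c = int i + 0 * int n; d = int i + int k + 0 * int n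
        in (a \<le> c \<and> d \<le> b) \<or> (c \<le> a \<and> b \<le> d) \<or> (b \<le> c \<and> d \<le> a + int n)" by simp
  then show ?thesis using Bd by (simp only: compatible.simps) blast
qed

lemma compat_sym:
  assumes "\<alpha> \<in> arcs n" "\<beta> \<in> arcs n"
  shows "compatible n \<alpha> \<beta> = compatible n \<beta> \<alpha>"
proof (cases \<alpha>)
  case (Rad i)
  then show ?thesis by (cases \<beta>) auto
next
  case (Bd i k)
  show ?thesis
  proof (cases \<beta>)
    case (Rad j) then show ?thesis using Bd by simp
  next
    case (Bd j l)
    note Bd' = this
    have p: "i < n" "j < n" "1 \<le> k" "k \<le> n" "1 \<le> l" "l \<le> n" using assms \<open>\<alpha> = Bd i k\<close> Bd' by (auto simp: arcs_Bd)
    have p': "j < n" "i < n" "1 \<le> l" "l \<le> n" "1 \<le> k" "k \<le> n" using p by auto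
    have cs: "cross a b c d = cross c d a b" for a b c d unfolding cross_def by auto
    show ?thesis unfolding \<open>\<alpha> = Bd i k\<close> Bd' compat_BB_iff[OF p] compat_BB_iff[OF p'] using cs by blast
  qed
qed

context
  fixes n :: nat
  assumes n: "n \<ge> 1"
begin

lemma phi_comps: "T \<in> triangulations n \<Longrightarrow> phi n T \<in> comps n"
  using card_T[OF n] card_T_phi[OF tri_props(1) tri_fin] unfolding comps_def phi_def by auto

lemma T_eq_psi: "T \<in> triangulations n \<Longrightarrow> T = psi n (phi n T)"
proof
  assume T: "T \<in> triangulations n"
  show "T \<subseteq> psi n (phi n T)" by (rule T_sub_psi[OF n T])
  show "psi n (phi n T) \<subseteq> T"
  proof
    fix \<beta> assume b: "\<beta> \<in> psi n (phi n T)"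
    show "\<beta> \<in> T"
    proof (rule tri_props(3)[OF T])
      show "\<beta> \<in> arcs n" using b psi_arcs by auto
      fix \<gamma> assume "\<gamma> \<in> T"
      then have "\<gamma> \<in> psi n (phi n T)" using T_sub_psi[OF n T] by auto
      then show "compatible n \<beta> \<gamma>" using psi_compat[OF n phi_comps[OF T] b] by simp
    qed
  qed
qed

lemma phi_inj: "inj_on (phi n) (triangulations n)"
proof (rule inj_onI)
  fix x y assume x: "x \<in> triangulations n" and y: "y \<in> triangulations n" and e: "phi n x = phi n y"
  have "x = psi n (phi n x)" by (rule T_eq_psi[OF x])
  also have "\<dots> = psi n (phi n y)" using e by simp
  also have "\<dots> = y" by (rule T_eq_psi[OF y, symmetric])
  finally show "x = y" .
qed

lemma exists_tri: "a \<in> comps n \<Longrightarrow> \<exists>T \<in> triangulations n. psi n a \<subseteq> T"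
proof -
  assume a: "a \<in> comps n"
  let ?S = "{T. psi n a \<subseteq> T \<and> T \<subseteq> arcs n \<and> (\<forall>\<alpha>\<in>T. \<forall>\<beta>\<in>T. compatible n \<alpha> \<beta>)}"
  have finS: "finite ?S" by (rule finite_subset[of _ "Pow (arcs n)"]) (auto simp: arcs_fin)
  have "psi n a \<in> ?S" using psi_arcs psi_compat[OF n a] by auto
  then have ne: "?S \<noteq> {}" by blast
  from finite_has_maximal[OF finS ne] obtain T where T: "T \<in> ?S" and Tmax: "\<forall>b\<in>?S. T \<le> b \<longrightarrow> T = b"
    by blast
  have T1: "psi n a \<subseteq> T" "T \<subseteq> arcs n" "\<And>\<alpha> \<beta>. \<alpha> \<in> T \<Longrightarrow> \<beta> \<in> T \<Longrightarrow> compatible n \<alpha> \<beta>"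
    using T by auto
  have "T \<in> triangulations n"
    unfolding triangulations_def
  proof (intro CollectI conjI ballI impI)
    show "T \<subseteq> arcs n" using T1 by simp
    show "compatible n \<alpha> \<beta>" if "\<alpha> \<in> T" "\<beta> \<in> T" for \<alpha> \<beta> using T1(3) that by simp
    fix \<alpha> assume al: "\<alpha> \<in> arcs n" and c: "\<forall>\<beta>\<in>T. compatible n \<alpha> \<beta>"
    have ins: "insert \<alpha> T \<in> ?S"
    proof -
      have cb: "compatible n \<beta> \<alpha>" if "\<beta> \<in> T" for \<beta>
      proof -
        have "\<beta> \<in> arcs n" using that T1(2) by auto
        then show ?thesis using c that compat_sym[OF al, of \<beta>] by simp
      qed
      have "\<forall>x\<in>insert \<alpha> T. \<forall>y\<in>insert \<alpha> T. compatible n x y"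
        using T1(3) cb c compat_refl[OF al] by blast
      then show ?thesis using T1 al by blast
    qed
    have sub: "T \<le> insert \<alpha> T" by auto
    have "T = insert \<alpha> T" using bspec[OF Tmax ins] sub by (rule mp)
    then show "\<alpha> \<in> T" by auto
  qed
  then show ?thesis using T by blast
qed

lemma sum_ge_eq:
  fixes f g :: "nat \<Rightarrow> nat"
  assumes "\<And>i. i < m \<Longrightarrow> g i \<le> f i" "(\<Sum>i<m. f i) = (\<Sum>i<m. g i)"
  shows "\<And>i. i < m \<Longrightarrow> f i = g i"
proof -
  have "(\<Sum>i<m. f i) = (\<Sum>i<m. g i + (f i - g i))" using assms(1) by (intro sum.cong) auto
  also have "\<dots> = (\<Sum>i<m. g i) + (\<Sum>i<m. f i - g i)" by (simp add: sum.distrib)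
  finally have "(\<Sum>i<m. f i - g i) = 0" using assms(2) by simp
  then have z: "\<forall>i\<in>{..<m}. f i - g i = 0" by simp
  fix i assume i: "i < m"
  then have "f i - g i = 0" "g i \<le> f i" using z assms(1) by auto
  then show "f i = g i" by simp
qed

lemma phi_surj: "a \<in> comps n \<Longrightarrow> \<exists>T \<in> triangulations n. phi n T = a"
proof -
  assume a: "a \<in> comps n"
  obtain T where T: "T \<in> triangulations n" "psi n a \<subseteq> T" using exists_tri[OF a] by blast
  have ge: "a i \<le> phi n T i" if "i < n" for i
  proof -
    have "a i = phi n (psi n a) i" using psi_count[OF n a] by simp
    also have "\<dots> \<le> phi n T i" unfolding phi_def using that T tri_fin[OF T(1)]
      by (auto intro!: card_mono)
    finally show ?thesis .
  qed
  have "(\<Sum>i<n. phi n T i) = (\<Sum>i<n. a i)"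
    using phi_comps[OF T(1)] a unfolding comps_def by simp
  then have eq: "\<And>i. i < n \<Longrightarrow> phi n T i = a i" using sum_ge_eq[of n a "phi n T"] ge by blast
  have "phi n T = a"
  proof
    fix i show "phi n T i = a i"
      using eq[of i] a unfolding comps_def phi_def by (cases "i < n") auto
  qed
  then show ?thesis using T by blast
qed

lemma phi_bij: "bij_betw (phi n) (triangulations n) (comps n)"
  unfolding bij_betw_def
proof (intro conjI)
  show "inj_on (phi n) (triangulations n)" by (rule phi_inj)
  show "phi n ` triangulations n = comps n"
  proof
    show "phi n ` triangulations n \<subseteq> comps n" using phi_comps by auto
    show "comps n \<subseteq> phi n ` triangulations n"
    proof
      fix a assume "a \<in> comps n"
      then obtain T where "T \<in> triangulations n" "phi n T = a" using phi_surj by blast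
      then show "a \<in> phi n ` triangulations n" by blast
    qed
  qed
qed

end


lemma rot_idx: "(i::nat) < n \<Longrightarrow> (i + n - 1) mod n = (if i = 0 then n - 1 else i - 1)"
proof (cases "i = 0")
  case True
  assume "i < n"
  then have "n - 1 < n" by arith
  then show ?thesis using True by simp
next
  case False
  assume i: "i < n"
  then have eq: "i + n - 1 = (i - 1) + n" using False by simp
  have "((i - 1) + n) mod n = i - 1" using i by simp
  then show ?thesis unfolding eq using False by simp
qed

lemma rot_idx_int: "(i::nat) < n \<Longrightarrow> int ((i + n - 1) mod n) = (int i - 1) mod int n"
proof -
  assume i: "i < n"
  have "int ((i + n - 1) mod n) = int (i + n - 1) mod int n" by (simp add: zmod_int)
  also have "int (i + n - 1) = (int i - 1) + int n" using i by simp
  finally show ?thesis by simp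
qed

context
  fixes n :: nat
  assumes n: "n \<ge> 1"
begin

lemma rot_lift: "i < n \<Longrightarrow> (x mod int n = int ((i + n - 1) mod n)) = ((x + 1) mod int n = int i)"
proof -
  assume i: "i < n"
  have "(x mod int n = (int i - 1) mod int n) = (int n dvd (x - (int i - 1)))" by (simp add: mod_eq_dvd_iff)
  also have "\<dots> = (int n dvd ((x + 1) - int i))" by (simp add: algebra_simps)
  also have "\<dots> = ((x + 1) mod int n = int i mod int n)" by (simp add: mod_eq_dvd_iff)
  finally show ?thesis using rot_idx_int[OF i] i by simp
qed

lemma rot_arcs: "\<alpha> \<in> arcs n \<Longrightarrow> rot_arc n \<alpha> \<in> arcs n"
  using n by (cases \<alpha>) (auto simp: arcs_Bd arcs_Rad)

lemma rot_idx_lt: "i < n \<Longrightarrow> (i + n - 1) mod n < n"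
  using n by simp

lemma rot_compat:
  assumes a: "\<alpha> \<in> arcs n" and b: "\<beta> \<in> arcs n"
  shows "compatible n (rot_arc n \<alpha>) (rot_arc n \<beta>) = compatible n \<alpha> \<beta>"
proof -
  have RB: "compatible n (Rad ((j + n - 1) mod n)) (Bd ((i + n - 1) mod n) k) = compatible n (Rad j) (Bd i k)"
    if ij: "i < n" "j < n" for i j k
  proof -
    have L: "compatible n (Rad ((j + n - 1) mod n)) (Bd ((i + n - 1) mod n) k) =
      (\<forall>x y. (x + 1) mod int n = int i \<longrightarrow> (y + 1) mod int n = int j \<longrightarrow> \<not> (x < y \<and> y < x + int k))"
      by (subst compat_RB_iff) (use ij rot_idx_lt rot_lift in auto)
    have R: "compatible n (Rad j) (Bd i k) =
      (\<forall>x y. x mod int n = int i \<longrightarrow> y mod int n = int j \<longrightarrow> \<not> (x < y \<and> y < x + int k))"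
      by (rule compat_RB_iff[OF ij])
    show ?thesis unfolding L R
    proof
      assume H: "\<forall>x y. (x + 1) mod int n = int i \<longrightarrow> (y + 1) mod int n = int j \<longrightarrow> \<not> (x < y \<and> y < x + int k)"
      show "\<forall>x y. x mod int n = int i \<longrightarrow> y mod int n = int j \<longrightarrow> \<not> (x < y \<and> y < x + int k)"
      proof (intro allI impI)
        fix x y assume "x mod int n = int i" "y mod int n = int j"
        then show "\<not> (x < y \<and> y < x + int k)" using H[rule_format, of "x - 1" "y - 1"] by auto
      qed
    next
      assume H: "\<forall>x y. x mod int n = int i \<longrightarrow> y mod int n = int j \<longrightarrow> \<not> (x < y \<and> y < x + int k)"
      show "\<forall>x y. (x + 1) mod int n = int i \<longrightarrow> (y + 1) mod int n = int j \<longrightarrow> \<not> (x < y \<and> y < x + int k)"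
      proof (intro allI impI)
        fix x y assume "(x + 1) mod int n = int i" "(y + 1) mod int n = int j"
        then show "\<not> (x < y \<and> y < x + int k)" using H[rule_format, of "x + 1" "y + 1"] by auto
      qed
    qed
  qed
  have BB: "compatible n (Bd ((i + n - 1) mod n) k) (Bd ((j + n - 1) mod n) l) = compatible n (Bd i k) (Bd j l)"
    if p: "i < n" "j < n" "1 \<le> k" "k \<le> n" "1 \<le> l" "l \<le> n" for i j k l
  proof -
    have L: "compatible n (Bd ((i + n - 1) mod n) k) (Bd ((j + n - 1) mod n) l) =
      (\<forall>x y. (x + 1) mod int n = int i \<longrightarrow> (y + 1) mod int n = int j \<longrightarrow> \<not> cross x (x + int k) y (y + int l))"
      by (subst compat_BB_iff) (use p rot_idx_lt rot_lift in auto)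
    have R: "compatible n (Bd i k) (Bd j l) =
      (\<forall>x y. x mod int n = int i \<longrightarrow> y mod int n = int j \<longrightarrow> \<not> cross x (x + int k) y (y + int l))"
      by (rule compat_BB_iff[OF p])
    have cs: "cross (x + c) (x + c + k') (y + c) (y + c + l') = cross x (x + k') y (y + l')" for x y c k' l' :: int
      unfolding cross_def by auto
    show ?thesis unfolding L R
    proof
      assume H: "\<forall>x y. (x + 1) mod int n = int i \<longrightarrow> (y + 1) mod int n = int j \<longrightarrow> \<not> cross x (x + int k) y (y + int l)"
      show "\<forall>x y. x mod int n = int i \<longrightarrow> y mod int n = int j \<longrightarrow> \<not> cross x (x + int k) y (y + int l)"
      proof (intro allI impI)
        fix x y assume "x mod int n = int i" "y mod int n = int j"
        then have "\<not> cross (x + -1) (x + -1 + int k) (y + -1) (y + -1 + int l)"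
          using H[rule_format, of "x - 1" "y - 1"] by simp
        then show "\<not> cross x (x + int k) y (y + int l)" unfolding cs .
      qed
    next
      assume H: "\<forall>x y. x mod int n = int i \<longrightarrow> y mod int n = int j \<longrightarrow> \<not> cross x (x + int k) y (y + int l)"
      show "\<forall>x y. (x + 1) mod int n = int i \<longrightarrow> (y + 1) mod int n = int j \<longrightarrow> \<not> cross x (x + int k) y (y + int l)"
      proof (intro allI impI)
        fix x y assume "(x + 1) mod int n = int i" "(y + 1) mod int n = int j"
        then have "\<not> cross (x + 1) (x + 1 + int k) (y + 1) (y + 1 + int l)"
          using H[rule_format, of "x + 1" "y + 1"] by (simp add: algebra_simps)
        then show "\<not> cross x (x + int k) y (y + int l)" unfolding cs .
      qed
    qed
  qed
  show ?thesis
  proof (cases \<alpha>)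
    case (Rad j)
    show ?thesis
    proof (cases \<beta>)
      case (Rad j') then show ?thesis using \<open>\<alpha> = Rad j\<close> by simp
    next
      case (Bd i k)
      then show ?thesis using RB[of i j k] a b \<open>\<alpha> = Rad j\<close> by (simp add: arcs_Bd arcs_Rad)
    qed
  next
    case (Bd i k)
    show ?thesis
    proof (cases \<beta>)
      case (Rad j)
      then show ?thesis using RB[of i j k] a b \<open>\<alpha> = Bd i k\<close> by (simp add: arcs_Bd arcs_Rad)
    next
      case (Bd j l)
      then show ?thesis using BB[of i j k l] a b \<open>\<alpha> = Bd i k\<close> by (simp add: arcs_Bd)
    qed
  qed
qed

lemma rot_inj: "inj_on (rot_arc n) (arcs n)"
proof (rule inj_onI)
  fix \<alpha> \<beta> assume a: "\<alpha> \<in> arcs n" and b: "\<beta> \<in> arcs n" and e: "rot_arc n \<alpha> = rot_arc n \<beta>"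
  have idx: "(i + n - 1) mod n = (j + n - 1) mod n \<Longrightarrow> i < n \<Longrightarrow> j < n \<Longrightarrow> i = j" for i j
  proof -
    assume h: "(i + n - 1) mod n = (j + n - 1) mod n" "i < n" "j < n"
    then have "(if i = 0 then n - 1 else i - 1) = (if j = 0 then n - 1 else j - 1)"
      using rot_idx[of i n] rot_idx[of j n] by simp
    then show "i = j" using h(2,3) by (simp split: if_splits)
  qed
  show "\<alpha> = \<beta>"
  proof (cases \<alpha>)
    case (Rad i)
    show ?thesis
    proof (cases \<beta>)
      case (Rad j)
      have "i < n" "j < n" using a b \<open>\<alpha> = Rad i\<close> Rad by (auto simp: arcs_Rad)
      moreover have "(i + n - 1) mod n = (j + n - 1) mod n" using e \<open>\<alpha> = Rad i\<close> Rad by simp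
      ultimately show ?thesis using idx \<open>\<alpha> = Rad i\<close> Rad by blast
    next
      case (Bd j l) then show ?thesis using e \<open>\<alpha> = Rad i\<close> by simp
    qed
  next
    case (Bd i k)
    show ?thesis
    proof (cases \<beta>)
      case (Rad j) then show ?thesis using e \<open>\<alpha> = Bd i k\<close> by simp
    next
      case (Bd j l)
      have "i < n" "j < n" using a b \<open>\<alpha> = Bd i k\<close> Bd by (auto simp: arcs_Bd)
      moreover have "(i + n - 1) mod n = (j + n - 1) mod n" "k = l" using e \<open>\<alpha> = Bd i k\<close> Bd by simp_all
      ultimately show ?thesis using idx \<open>\<alpha> = Bd i k\<close> Bd by blast
    qed
  qed
qed

lemma rot_surj: "rot_arc n ` arcs n = arcs n"
  by (rule endo_inj_surj[OF arcs_fin _ rot_inj]) (use rot_arcs in auto)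

lemma rot_tri_mem:
  assumes T: "T \<in> triangulations n"
  shows "rot_tri n T \<in> triangulations n"
proof -
  note TP = tri_props[OF T]
  show ?thesis unfolding triangulations_def rot_tri_def
  proof (intro CollectI conjI ballI impI)
    show "rot_arc n ` T \<subseteq> arcs n" using TP(1) rot_arcs by auto
    fix \<alpha> \<beta> assume "\<alpha> \<in> rot_arc n ` T" "\<beta> \<in> rot_arc n ` T"
    then obtain \<alpha>' \<beta>' where ab: "\<alpha>' \<in> T" "\<beta>' \<in> T" "\<alpha> = rot_arc n \<alpha>'" "\<beta> = rot_arc n \<beta>'" by auto
    have "\<alpha>' \<in> arcs n" "\<beta>' \<in> arcs n" using ab TP(1) by auto
    then show "compatible n \<alpha> \<beta>" using rot_compat[of \<alpha>' \<beta>'] TP(2)[OF ab(1,2)] ab by simp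
  next
    fix \<gamma> assume g: "\<gamma> \<in> arcs n" and c: "\<forall>\<beta>\<in>rot_arc n ` T. compatible n \<gamma> \<beta>"
    obtain \<delta> where d: "\<delta> \<in> arcs n" "\<gamma> = rot_arc n \<delta>" using g rot_surj by (metis imageE)
    have "\<delta> \<in> T"
    proof (rule TP(3)[OF d(1)])
      fix \<beta> assume b: "\<beta> \<in> T"
      then have "compatible n (rot_arc n \<delta>) (rot_arc n \<beta>)" using c d by auto
      then show "compatible n \<delta> \<beta>" using rot_compat[OF d(1)] b TP(1) by auto
    qed
    then show "\<gamma> \<in> rot_arc n ` T" using d by auto
  qed
qed

lemma rot_tri_pow: "(rot_tri n ^^ j) T = (rot_arc n ^^ j) ` T"
proof (induction j)
  case 0 then show ?case by simp
next
  case (Suc j) then show ?case by (simp add: rot_tri_def image_comp)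
qed

lemma rot_arc_pow: "\<alpha> \<in> arcs n \<Longrightarrow> (rot_arc n ^^ j) \<alpha> = (case \<alpha> of Rad i \<Rightarrow> Rad ((i + j * (n - 1)) mod n) | Bd i k \<Rightarrow> Bd ((i + j * (n - 1)) mod n) k)"
proof (induction j)
  case 0 then show ?case by (cases \<alpha>) (auto simp: arcs_Bd arcs_Rad)
next
  case (Suc j)
  have e: "((x mod n) + n - 1) mod n = (x + (n - 1)) mod n" for x
  proof -
    have "(x mod n) + n - 1 = (x mod n) + (n - 1)" using n by simp
    then show ?thesis by (simp add: mod_add_left_eq)
  qed
  have e2: "x + j * (n - 1) + (n - 1) = x + ((n - 1) + j * (n - 1))" for x by simp
  show ?case using Suc e by (cases \<alpha>) (auto simp: ac_simps)
qed

lemma rot_arc_n: "\<alpha> \<in> arcs n \<Longrightarrow> (rot_arc n ^^ n) \<alpha> = \<alpha>"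
proof -
  assume a: "\<alpha> \<in> arcs n"
  have m: "(i + n * (n - 1)) mod n = i" if "i < n" for i using that by simp
  show ?thesis using rot_arc_pow[OF a, of n] a m by (cases \<alpha>) (auto simp: arcs_Bd arcs_Rad)
qed

lemma rot_tri_n: "T \<subseteq> arcs n \<Longrightarrow> (rot_tri n ^^ n) T = T"
proof -
  assume T: "T \<subseteq> arcs n"
  have "(rot_arc n ^^ n) ` T = T"
  proof
    show "(rot_arc n ^^ n) ` T \<subseteq> T" using T rot_arc_n by auto
    show "T \<subseteq> (rot_arc n ^^ n) ` T"
    proof
      fix x assume "x \<in> T"
      then show "x \<in> (rot_arc n ^^ n) ` T" using T rot_arc_n[of x] by (metis image_eqI subsetD)
    qed
  qed
  then show ?thesis using rot_tri_pow by simp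
qed

lemma rot_tri_pow_mem: "T \<in> triangulations n \<Longrightarrow> (rot_tri n ^^ j) T \<in> triangulations n"
  by (induction j) (auto intro: rot_tri_mem)

lemma rot_bij: "bij_betw (rot_tri n) (triangulations n) (triangulations n)"
  unfolding bij_betw_def
proof (intro conjI)
  have nn: "n = Suc (n - 1)" using n by simp
  have bk: "(rot_tri n ^^ (n - 1)) (rot_tri n T) = T" if "T \<in> triangulations n" for T
  proof -
    have "(rot_tri n ^^ (n - 1)) (rot_tri n T) = (rot_tri n ^^ Suc (n - 1)) T" by (simp only: funpow_Suc_right comp_def)
    also have "\<dots> = T" using rot_tri_n tri_props(1)[OF that] nn by simp
    finally show ?thesis .
  qed
  show "inj_on (rot_tri n) (triangulations n)"
  proof (rule inj_onI)
    fix x y assume x: "x \<in> triangulations n" and y: "y \<in> triangulations n" and e: "rot_tri n x = rot_tri n y"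
    have "x = (rot_tri n ^^ (n - 1)) (rot_tri n x)" using bk[OF x] by simp
    also have "\<dots> = (rot_tri n ^^ (n - 1)) (rot_tri n y)" using e by simp
    also have "\<dots> = y" using bk[OF y] by simp
    finally show "x = y" .
  qed
  show "rot_tri n ` triangulations n = triangulations n"
  proof
    show "rot_tri n ` triangulations n \<subseteq> triangulations n" using rot_tri_mem by auto
    show "triangulations n \<subseteq> rot_tri n ` triangulations n"
    proof
      fix T assume T: "T \<in> triangulations n"
      have "T = (rot_tri n ^^ Suc (n - 1)) T" using rot_tri_n tri_props(1)[OF T] nn by simp
      also have "\<dots> = rot_tri n ((rot_tri n ^^ (n - 1)) T)" by simp
      finally show "T \<in> rot_tri n ` triangulations n" using rot_tri_pow_mem[OF T] by blast
    qed
  qed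
qed

lemma start_rot: "\<alpha> \<in> arcs n \<Longrightarrow> start (rot_arc n \<alpha>) = (start \<alpha> + n - 1) mod n"
  by (cases \<alpha>) auto

lemma start_lt: "\<alpha> \<in> arcs n \<Longrightarrow> start \<alpha> < n"
  by (cases \<alpha>) (auto simp: arcs_Bd arcs_Rad)

lemma phi_rot:
  assumes T: "T \<subseteq> arcs n" "finite T" and i: "i < n"
  shows "phi n (rot_tri n T) i = phi n T ((i + 1) mod n)"
proof -
  have key: "((s + n - 1) mod n = i) = (s = (i + 1) mod n)" if s: "s < n" for s
  proof (cases "i + 1 < n")
    case True
    then show ?thesis using rot_idx[OF s] s by auto
  next
    case False
    then have "i + 1 = n" using i by simp
    then show ?thesis using rot_idx[OF s] s by auto
  qed
  have n0: "0 < n" using n by simp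
  have eq: "{\<alpha> \<in> rot_arc n ` T. start \<alpha> = i} = rot_arc n ` {\<beta> \<in> T. start \<beta> = (i + 1) mod n}"
  proof
    show "{\<alpha> \<in> rot_arc n ` T. start \<alpha> = i} \<subseteq> rot_arc n ` {\<beta> \<in> T. start \<beta> = (i + 1) mod n}"
    proof
      fix \<alpha> assume "\<alpha> \<in> {\<alpha> \<in> rot_arc n ` T. start \<alpha> = i}"
      then obtain \<beta> where b: "\<beta> \<in> T" "\<alpha> = rot_arc n \<beta>" "start (rot_arc n \<beta>) = i" by auto
      have "\<beta> \<in> arcs n" using b T by auto
      then have "start \<beta> = (i + 1) mod n" using b key[of "start \<beta>"] start_rot start_lt n0 by simp
      then show "\<alpha> \<in> rot_arc n ` {\<beta> \<in> T. start \<beta> = (i + 1) mod n}" using b by auto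
    qed
    show "rot_arc n ` {\<beta> \<in> T. start \<beta> = (i + 1) mod n} \<subseteq> {\<alpha> \<in> rot_arc n ` T. start \<alpha> = i}"
    proof
      fix \<alpha> assume "\<alpha> \<in> rot_arc n ` {\<beta> \<in> T. start \<beta> = (i + 1) mod n}"
      then obtain \<beta> where b: "\<beta> \<in> T" "\<alpha> = rot_arc n \<beta>" "start \<beta> = (i + 1) mod n" by auto
      have "\<beta> \<in> arcs n" using b T by auto
      then have "start (rot_arc n \<beta>) = i" using b key[of "start \<beta>"] start_rot start_lt n0 by simp
      then show "\<alpha> \<in> {\<alpha> \<in> rot_arc n ` T. start \<alpha> = i}" using b by auto
    qed
  qed
  have inj: "inj_on (rot_arc n) {\<beta> \<in> T. start \<beta> = (i + 1) mod n}"
    by (rule inj_on_subset[OF rot_inj]) (use T in auto)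
  have "(i + 1) mod n < n" using n by simp
  then show ?thesis unfolding phi_def rot_tri_def using i eq card_image[OF inj] by simp
qed

lemma phi_rot_pow:
  assumes T: "T \<in> triangulations n"
  shows "i < n \<Longrightarrow> phi n ((rot_tri n ^^ j) T) i = phi n T ((i + j) mod n)"
proof (induction j arbitrary: i)
  case 0 then show ?case by simp
next
  case (Suc j)
  have X: "(rot_tri n ^^ j) T \<in> triangulations n" by (rule rot_tri_pow_mem[OF T])
  have "phi n ((rot_tri n ^^ Suc j) T) i = phi n (rot_tri n ((rot_tri n ^^ j) T)) i" by simp
  also have "\<dots> = phi n ((rot_tri n ^^ j) T) ((i + 1) mod n)"
    by (rule phi_rot[OF tri_props(1)[OF X] tri_fin[OF X] Suc.prems])
  also have "\<dots> = phi n T (((i + 1) mod n + j) mod n)" using Suc.IH n by simp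
  also have "((i + 1) mod n + j) mod n = (i + Suc j) mod n" by (simp add: mod_add_left_eq)
  finally show ?case .
qed

end


lemma fix_count:
  assumes n: "n \<ge> 1"
  shows "card {T \<in> triangulations n. (rot_tri n ^^ j) T = T} = card {a \<in> comps n. \<forall>i<n. a ((i + j) mod n) = a i}"
proof -
  let ?A = "{T \<in> triangulations n. (rot_tri n ^^ j) T = T}"
  let ?B = "{a \<in> comps n. \<forall>i<n. a ((i + j) mod n) = a i}"
  have iff: "(rot_tri n ^^ j) T = T \<longleftrightarrow> (\<forall>i<n. phi n T ((i + j) mod n) = phi n T i)"
    if T: "T \<in> triangulations n" for T
  proof
    assume "(rot_tri n ^^ j) T = T"
    then show "\<forall>i<n. phi n T ((i + j) mod n) = phi n T i" using phi_rot_pow[OF n T] by metis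
  next
    assume H: "\<forall>i<n. phi n T ((i + j) mod n) = phi n T i"
    have "phi n ((rot_tri n ^^ j) T) = phi n T"
    proof
      fix i show "phi n ((rot_tri n ^^ j) T) i = phi n T i"
      proof (cases "i < n")
        case True then show ?thesis using phi_rot_pow[OF n T True] H by simp
      next
        case False then show ?thesis unfolding phi_def by simp
      qed
    qed
    then show "(rot_tri n ^^ j) T = T"
      using inj_onD[OF phi_inj[OF n]] rot_tri_pow_mem[OF n T] T by blast
  qed
  have inj: "inj_on (phi n) ?A" by (rule inj_on_subset[OF phi_inj[OF n]]) auto
  have img: "phi n ` ?A = ?B"
  proof
    show "phi n ` ?A \<subseteq> ?B" using iff phi_comps[OF n] by auto
    show "?B \<subseteq> phi n ` ?A"
    proof
      fix a assume a: "a \<in> ?B"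
      then obtain T where T: "T \<in> triangulations n" "phi n T = a" using phi_surj[OF n] by blast
      then have "T \<in> ?A" using iff[OF T(1)] a by auto
      then show "a \<in> phi n ` ?A" using T by blast
    qed
  qed
  show ?thesis using card_image[OF inj] img by simp
qed

definition shinv :: "nat \<Rightarrow> nat \<Rightarrow> (nat \<Rightarrow> nat) \<Rightarrow> bool" where
  "shinv n s a \<longleftrightarrow> (\<forall>i<n. a ((i + s) mod n) = a i)"

lemma shinv_mult: "shinv n s a \<Longrightarrow> shinv n (k * s) a"
proof (induction k)
  case 0 then show ?case unfolding shinv_def by simp
next
  case (Suc k)
  show ?case unfolding shinv_def
  proof (intro allI impI)
    fix i assume i: "i < n"
    have n0: "0 < n" using i by simp
    have "(i + Suc k * s) mod n = ((i + k * s) + s) mod n" by (simp add: algebra_simps)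
    also have "\<dots> = ((i + k * s) mod n + s) mod n" by (simp add: mod_add_left_eq)
    finally have "(i + Suc k * s) mod n = ((i + k * s) mod n + s) mod n" .
    then have "a ((i + Suc k * s) mod n) = a ((i + k * s) mod n)"
      using Suc.prems n0 unfolding shinv_def by simp
    also have "\<dots> = a i" using Suc.IH Suc.prems i unfolding shinv_def by simp
    finally show "a ((i + Suc k * s) mod n) = a i" .
  qed
qed

lemma shinv_mod: "shinv n s a \<Longrightarrow> s mod n = s' mod n \<Longrightarrow> shinv n s' a"
  unfolding shinv_def by (metis mod_add_right_eq)

lemma shinv_gcd:
  assumes n: "n \<ge> 1" and H: "shinv n j a"
  shows "shinv n (gcd j n) a"
proof (cases "j = 0")
  case True
  then show ?thesis unfolding shinv_def by simp
next
  case False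
  obtain x y where xy: "j * x = n * y + gcd j n" using bezout_nat[OF False, of n] by blast
  have "shinv n (x * j) a" by (rule shinv_mult[OF H])
  moreover have "(x * j) mod n = gcd j n mod n" using xy by (simp add: mult.commute)
  ultimately show ?thesis by (rule shinv_mod)
qed

lemma shinv_period:
  assumes H: "shinv n d a" and d: "d dvd n" "0 < d"
  shows "i < n \<Longrightarrow> a i = a (i mod d)"
proof (induction i rule: less_induct)
  case (less i)
  show ?case
  proof (cases "i < d")
    case True then show ?thesis by simp
  next
    case False
    have "a ((i - d + d) mod n) = a (i - d)" using H less.prems unfolding shinv_def by simp
    moreover have "(i - d + d) mod n = i" using False less.prems by simp
    moreover have "a (i - d) = a ((i - d) mod d)" using less.IH[of "i - d"] less.prems False d by simp
    moreover have "(i - d) mod d = i mod d" using False le_mod_geq[of d i] by simp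
    ultimately show ?thesis by simp
  qed
qed

lemma block_sum_gen: "(\<Sum>k<q*e. f k) = (\<Sum>i<q. \<Sum>r<e. f (i*e + r))" for q e :: nat
proof (induction q)
  case 0 then show ?case by simp
next
  case (Suc q)
  have "(\<Sum>k<Suc q*e. f k) = (\<Sum>k<q*e. f k) + (\<Sum>k\<in>{q*e..<q*e+e}. f k)"
    by (simp add: atLeast0LessThan[symmetric] sum.atLeastLessThan_concat add.commute)
  also have "(\<Sum>k\<in>{q*e..<q*e+e}. f k) = (\<Sum>r<e. f (q*e + r))"
    using sum.shift_bounds_nat_ivl[of f 0 "q*e" e]
    by (simp add: atLeast0LessThan add.commute)
  finally show ?case using Suc by simp
qed

lemma periodic_sum:
  fixes b :: "nat \<Rightarrow> nat"
  shows "(\<Sum>i<e*d. b (i mod d)) = e * (\<Sum>i<d. b i)"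
proof -
  have "(\<Sum>i<e*d. b (i mod d)) = (\<Sum>q<e. \<Sum>r<d. b ((q*d + r) mod d))" by (rule block_sum_gen)
  also have "\<dots> = (\<Sum>q<e. \<Sum>r<d. b r)" by (intro sum.cong refl) simp
  finally show ?thesis by simp
qed

lemma card_comps: "card (comps d) = (d + d - 1) choose d"
proof -
  let ?L = "{l::nat list. length l = d \<and> sum_list l = d}"
  have bij: "bij_betw (\<lambda>a. map a [0..<d]) (comps d) ?L"
  proof (rule bij_betw_byWitness[where f'="\<lambda>l i. if i < d then l ! i else 0"])
    show "\<forall>a\<in>comps d. (\<lambda>i. if i < d then map a [0..<d] ! i else 0) = a"
      unfolding comps_def by (auto simp: fun_eq_iff)
    show "\<forall>l\<in>?L. map (\<lambda>i. if i < d then l ! i else 0) [0..<d] = l"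
      by (simp add: list_eq_iff_nth_eq)
    show "(\<lambda>a. map a [0..<d]) ` comps d \<subseteq> ?L"
    proof
      fix l assume "l \<in> (\<lambda>a. map a [0..<d]) ` comps d"
      then obtain a where a: "a \<in> comps d" "l = map a [0..<d]" by auto
      have "sum_list (map a [0..<d]) = (\<Sum>i<d. a i)"
        by (simp add: sum_set_upt_conv_sum_list_nat[symmetric] atLeast0LessThan)
      then show "l \<in> ?L" using a unfolding comps_def by simp
    qed
    show "(\<lambda>l i. if i < d then l ! i else 0) ` ?L \<subseteq> comps d"
    proof
      fix a assume "a \<in> (\<lambda>l i. if i < d then l ! i else 0) ` ?L"
      then obtain l where l: "l \<in> ?L" "a = (\<lambda>i. if i < d then l ! i else 0)" by auto
      have "(\<Sum>i<d. (if i < d then l ! i else 0)) = (\<Sum>i<d. l ! i)" by simp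
      also have "\<dots> = sum_list (map (\<lambda>i. l ! i) [0..<d])"
        by (simp add: sum_set_upt_conv_sum_list_nat[symmetric] atLeast0LessThan)
      also have "map (\<lambda>i. l ! i) [0..<d] = l"
      proof -
        have len: "length l = d" using l by simp
        show ?thesis using map_nth[of l] unfolding len .
      qed
      finally show "a \<in> comps d" using l unfolding comps_def by simp
    qed
  qed
  have "card (comps d) = card ?L" using bij_betw_same_card[OF bij] .
  also have "\<dots> = (d + d - 1) choose d" by (rule card_length_sum_list)
  finally show ?thesis .
qed

lemma periodic_count:
  assumes n: "n \<ge> 1"
  shows "card {a \<in> comps n. \<forall>i<n. a ((i + j) mod n) = a i} = (2 * gcd j n - 1) choose gcd j n"
proof -
  define d where "d = gcd j n"
  define e where "e = n div d"
  have d0: "0 < d" using n unfolding d_def by simp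
  have ddvd: "d dvd n" "d dvd j" unfolding d_def by simp_all
  have ne: "n = e * d" using ddvd unfolding e_def by simp
  have e0: "0 < e" using ne n by (cases e) auto
  let ?P = "{a \<in> comps n. \<forall>i<n. a ((i + j) mod n) = a i}"
  define r where "r a = (\<lambda>i. if i < d then a i else 0)" for a :: "nat \<Rightarrow> nat"
  define x where "x b = (\<lambda>i. if i < n then b (i mod d) else 0)" for b :: "nat \<Rightarrow> nat"
  have per: "a i = a (i mod d)" if "a \<in> ?P" "i < n" for a i
  proof -
    have "shinv n j a" using that unfolding shinv_def by auto
    then have "shinv n d a" using shinv_gcd[OF n] unfolding d_def by blast
    then show ?thesis using shinv_period[OF _ ddvd(1) d0] that by blast
  qed
  have dn: "d \<le> n" using ddvd(1) n by (simp add: dvd_imp_le)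
  have rP: "r a \<in> comps d" if a: "a \<in> ?P" for a
  proof -
    have "(\<Sum>i<n. a i) = (\<Sum>i<e*d. a (i mod d))" using per[OF a] ne by (intro sum.cong) auto
    also have "\<dots> = e * (\<Sum>i<d. a i)" by (rule periodic_sum)
    finally have "e * (\<Sum>i<d. a i) = e * d" using a ne unfolding comps_def by simp
    then have "(\<Sum>i<d. a i) = d" using e0 by simp
    then show "r a \<in> comps d" unfolding r_def comps_def by simp
  qed
  have xP: "x b \<in> ?P" if b: "b \<in> comps d" for b
  proof -
    have "(\<Sum>i<n. x b i) = (\<Sum>i<e*d. b (i mod d))" unfolding x_def using ne by (intro sum.cong) auto
    also have "\<dots> = e * d" using periodic_sum[where e=e and d=d and b=b] b unfolding comps_def by simp
    finally have s: "(\<Sum>i<n. x b i) = n" using ne by simp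
    have inv: "x b ((i + j) mod n) = x b i" if i: "i < n" for i
    proof -
      have "(i + j) mod n mod d = (i + j) mod d" using ddvd(1) by (simp add: mod_mod_cancel)
      also have "\<dots> = i mod d" using ddvd(2) by (metis mod_add_right_eq mod_0_imp_dvd dvd_imp_mod_0 add.right_neutral)
      finally show ?thesis unfolding x_def using i n by simp
    qed
    show "x b \<in> ?P" using s inv unfolding comps_def x_def by auto
  qed
  have xr: "x (r a) = a" if a: "a \<in> ?P" for a
  proof
    fix i show "x (r a) i = a i"
      using per[OF a, of i] a d0 unfolding x_def r_def comps_def by auto
  qed
  have rx: "r (x b) = b" if b: "b \<in> comps d" for b
  proof
    fix i show "r (x b) i = b i"
      using b dn unfolding x_def r_def comps_def by auto
  qed
  have bij: "bij_betw r ?P (comps d)"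
    by (rule bij_betw_byWitness[where f'=x]) (use rP xP xr rx in auto)
  have "card ?P = card (comps d)" by (rule bij_betw_same_card[OF bij])
  also have "\<dots> = (d + d - 1) choose d" by (rule card_comps)
  finally show ?thesis unfolding d_def by (simp add: mult_2)
qed

lemma prim_pow_dvd:
  assumes z: "primitive_root n z" and n: "n \<ge> 1" and m: "z ^ m = 1"
  shows "n dvd m"
proof -
  have zn: "z ^ n = 1" and zp: "\<And>k. 0 < k \<Longrightarrow> k < n \<Longrightarrow> z ^ k \<noteq> 1"
    using z unfolding primitive_root_def by auto
  have "z ^ m = z ^ (n * (m div n) + m mod n)" by simp
  also have "\<dots> = (z ^ n) ^ (m div n) * z ^ (m mod n)" by (simp only: power_add power_mult)
  finally have "z ^ m = (z ^ n) ^ (m div n) * z ^ (m mod n)" .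
  then have "z ^ (m mod n) = 1" using zn m by simp
  then have "m mod n = 0" using zp[of "m mod n"] n by (cases "m mod n = 0") auto
  then show ?thesis by (simp add: mod_eq_0_iff_dvd)
qed

lemma prim_rou:
  assumes z: "primitive_root n z" and n: "n \<ge> 1"
  shows "rou (z ^ j) (n div gcd j n)"
proof
  define d where "d = gcd j n"
  define e where "e = n div d"
  have d0: "0 < d" using n unfolding d_def by simp
  have ddvd: "d dvd n" "d dvd j" unfolding d_def by simp_all
  have ne: "n = d * e" using ddvd unfolding e_def by simp
  have e0: "0 < e" using ne n by (cases e) auto
  have zn: "z ^ n = 1" using z unfolding primitive_root_def by auto
  show "1 \<le> n div gcd j n" using e0 unfolding e_def d_def by simp
  have je: "j * e = (j div d) * n" using ddvd ne by (metis dvd_div_mult_self mult.assoc mult.commute)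
  show "(z ^ j) ^ (n div gcd j n) = 1"
    unfolding d_def[symmetric] e_def[symmetric] power_mult[symmetric] je
    by (simp add: power_mult mult.commute[of "j div d"] zn)
  fix k assume k: "0 < k" "k < n div gcd j n"
  show "(z ^ j) ^ k \<noteq> 1"
  proof
    assume "(z ^ j) ^ k = 1"
    then have "n dvd j * k" using prim_pow_dvd[OF z n] by (simp add: power_mult)
    moreover have "j * k = d * ((j div d) * k)" using ddvd(2) by (simp add: mult.assoc)
    ultimately have "d * e dvd d * ((j div d) * k)" using ne by simp
    then have "e dvd (j div d) * k" using d0 by simp
    moreover have "coprime e (j div d)"
      using div_gcd_coprime[of j n] n unfolding e_def d_def by (simp add: coprime_commute)
    ultimately have "e dvd k" by (simp add: coprime_dvd_mult_right_iff)
    then have "e \<le> k" using k by (simp add: dvd_imp_le)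
    then show False using k unfolding e_def d_def by simp
  qed
qed

theorem proposition3p9:
  fixes n :: nat
  assumes "n \<ge> 1"
  shows "cyclic_sieving (triangulations n) (rot_tri n) n (t_poly n)"
proof -
  note n = assms
  have fin: "finite (triangulations n)"
    by (rule finite_subset[of _ "Pow (arcs n)"]) (auto simp: triangulations_def arcs_fin)
  have per: "\<forall>x\<in>triangulations n. (rot_tri n ^^ n) x = x"
    using rot_tri_n[OF n] tri_props(1) by blast
  have csp: "poly (map_poly of_int (t_poly n)) (z ^ j) = of_nat (card {x \<in> triangulations n. (rot_tri n ^^ j) x = x})"
    if z: "primitive_root n z" for z j
  proof -
    define d where "d = gcd j n"
    define e where "e = n div d"
    have d0: "1 \<le> d" using n unfolding d_def by (simp add: Suc_leI)
    have ne: "d * e = n" unfolding e_def d_def by simp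
    interpret R: rou "z ^ j" e using prim_rou[OF z n] unfolding e_def d_def .
    have "poly (map_poly of_int (t_poly n)) (z ^ j) = ev (z ^ j) (t_poly (d * e))" unfolding ev_def ne ..
    also have "\<dots> = of_nat ((2 * d - 1) choose d)" by (rule R.t_eval[OF d0])
    also have "(2 * d - 1) choose d = card {x \<in> triangulations n. (rot_tri n ^^ j) x = x}"
      using fix_count[OF n] periodic_count[OF n] unfolding d_def by simp
    finally show ?thesis .
  qed
  show ?thesis unfolding cyclic_sieving_def using fin rot_bij[OF n] per csp by blast
qed


end
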